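(* The Mathieu group \(M_{22}\) possesses a symmetric generating set \(T=\{t_1,\dots,t_{14}\}\) consisting of 14 elements of order 2, with control group \(\mathcal{N}\cong L_3(2)\) acting on \(T\) via its transitive 14-point action. That is, there exist a subgroup \(\mathcal{N}\le M_{22}\) with \(\mathcal{N}\cong L_3(2)\) and 14 distinct involutions \(t_1,\dots,t_{14}\in M_{22}\) such that \(M_{22}=\langle t_1,\dots,t_{14}\rangle\), \(\mathcal{N}\) permutes \(\{t_1,\dots,t_{14}\}\) by conjugation, and this permutation action of \(\mathcal{N}\) is transitive and equivalent to the action of \(L_3(2)\) on the 14 cosets of a subgroup isomorphic to \(A_4\).
   Context: A progenitor \(2^{\star n}:\mathcal{N}\) is the semidirect product of the free product of \(n\) cyclic groups of order 2, generated by \(t_1,\dots,t_n\), by a transitive permutation group \(\mathcal{N}\le\Sigma_n\) permuting the \(t_i\). A group \(G\) is symmetrically generated (with symmetric generating set \(\{t_1,\dots,t_n\}\) and control group \(\mathcal{N}\)) if there is an epimorphism from the progenitor to \(G\) that is injective on \(\mathcal{N}\), maps the \(t_i\) to distinct involutions, and such that the images of the \(t_i\) generate \(G\). *)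

theory Defs
  imports "HOL-Algebra.Sym_Groups" "HOL-Combinatorics.Cycles"
begin

definition m23_a :: "nat \<Rightarrow> nat" where
  "m23_a = cycle_of_list [1..<24]"

definition m23_b :: "nat \<Rightarrow> nat" where
  "m23_b = cycle_of_list [3,17,10,7,9] \<circ> cycle_of_list [4,13,14,19,5]
         \<circ> cycle_of_list [8,18,11,12,23] \<circ> cycle_of_list [15,20,22,21,16]"

definition M23 :: "(nat \<Rightarrow> nat) monoid" where
  "M23 = (sym_group 23) \<lparr> carrier := generate (sym_group 23) {m23_a, m23_b} \<rparr>"

definition M22 :: "(nat \<Rightarrow> nat) monoid" where
  "M22 = M23 \<lparr> carrier := {p \<in> carrier M23. p 23 = 23} \<rparr>"

text \<open>L3(2) = GL(3,2), realised as the group of linear bijections of F_2^3,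
  acting on the nonzero vectors encoded as 1..7 (vector addition = bitwise xor).\<close>
definition L32 :: "(nat \<Rightarrow> nat) monoid" where
  "L32 = \<lparr> carrier = {p. p permutes {1..7} \<and>
              (\<forall>x\<in>{0..7}. \<forall>y\<in>{0..7}. p (xor x y) = xor (p x) (p y))},
           mult = (\<circ>), one = id \<rparr>"

end

theory Submission
  imports Defs "HOL-Library.List_Lexorder"
begin

section \<open>Permutations as lists\<close>

definition pl :: "nat list \<Rightarrow> nat \<Rightarrow> nat" where
 "pl xs x = (if 1 \<le> x \<and> x \<le> length xs then xs ! (x - 1) else x)"
definition cl :: "nat list \<Rightarrow> nat list \<Rightarrow> nat list" where
 "cl xs ys = map (pl xs) ys"
definition ID23 :: "nat list" where "ID23 = [1,2,3,4,5,6,7,8,9,10,11,12,13,14,15,16,17,18,19,20,21,22,23]"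
definition wev :: "nat list list \<Rightarrow> nat list \<Rightarrow> nat list" where
 "wev gs w = foldr (\<lambda>i acc. cl (gs ! i) acc) w ID23"

lemma length_cl [simp]: "length (cl xs ys) = length ys" by (simp add: cl_def)

lemma pl_comp: "length xs = length ys \<Longrightarrow> pl xs \<circ> pl ys = pl (cl xs ys)"
  by (auto simp: fun_eq_iff pl_def cl_def)

lemma ID23_upt: "ID23 = [1..<24]" by code_simp

lemma length_ID23 [simp]: "length ID23 = 23" by (simp add: ID23_def)

lemma pl_ID23: "pl ID23 = id"
  by (auto simp: fun_eq_iff pl_def ID23_upt)

lemma wev_closed:
  assumes "\<And>i. i \<in> set w \<Longrightarrow> pl (gs ! i) \<in> G" "\<And>i. i \<in> set w \<Longrightarrow> length (gs ! i) = 23"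
    "\<And>x y. x \<in> G \<Longrightarrow> y \<in> G \<Longrightarrow> x \<circ> y \<in> G" "id \<in> G"
  shows "pl (wev gs w) \<in> G \<and> length (wev gs w) = 23"
  using assms
proof (induction w)
  case Nil thus ?case by (simp add: wev_def pl_ID23)
next
  case (Cons i w)
  then have IH: "pl (wev gs w) \<in> G" "length (wev gs w) = 23" by auto
  have e: "wev gs (i#w) = cl (gs!i) (wev gs w)" by (simp add: wev_def)
  have "pl (cl (gs!i) (wev gs w)) = pl (gs!i) \<circ> pl (wev gs w)"
    using pl_comp IH Cons.prems(2) by simp
  then show ?case using Cons.prems IH e by simp
qed

lemma pl_eqI:
  assumes "length xs = n" "\<And>x. 1 \<le> x \<Longrightarrow> x \<le> n \<Longrightarrow> f x = xs ! (x - 1)"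
    "\<And>x. \<not>(1 \<le> x \<and> x \<le> n) \<Longrightarrow> f x = x"
  shows "f = pl xs"
  using assms by (auto simp: fun_eq_iff pl_def)

lemma range23: "1 \<le> (x::nat) \<Longrightarrow> x \<le> 23 \<Longrightarrow> x \<in> set ID23"
  by (simp add: ID23_upt)

lemma pl_inj: "length xs = length ys \<Longrightarrow> pl xs = pl ys \<Longrightarrow> xs = ys"
proof (rule nth_equalityI)
  fix i assume l: "length xs = length ys" and e: "pl xs = pl ys" and i: "i < length xs"
  have "pl xs (Suc i) = pl ys (Suc i)" using e by simp
  then show "xs ! i = ys ! i" using i l by (simp add: pl_def)
qed

lemma list_all_upt: "list_all P [0..<n] \<longleftrightarrow> (\<forall>k<n. P k)"
  by (auto simp: list_all_iff)

definition LA :: "nat list" where "LA = [2,3,4,5,6,7,8,9,10,11,12,13,14,15,16,17,18,19,20,21,22,23,1]"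

definition LB :: "nat list" where "LB = [1,2,17,13,4,6,9,18,3,7,12,23,14,19,20,15,10,11,5,22,16,21,8]"

definition AP :: "nat list list" where "AP = [
  [1,2,3,4,5,6,7,8,9,10,11,12,13,14,15,16,17,18,19,20,21,22,23],
  [2,3,4,5,6,7,8,9,10,11,12,13,14,15,16,17,18,19,20,21,22,23,1],
  [3,4,5,6,7,8,9,10,11,12,13,14,15,16,17,18,19,20,21,22,23,1,2],
  [4,5,6,7,8,9,10,11,12,13,14,15,16,17,18,19,20,21,22,23,1,2,3],
  [5,6,7,8,9,10,11,12,13,14,15,16,17,18,19,20,21,22,23,1,2,3,4],
  [6,7,8,9,10,11,12,13,14,15,16,17,18,19,20,21,22,23,1,2,3,4,5],
  [7,8,9,10,11,12,13,14,15,16,17,18,19,20,21,22,23,1,2,3,4,5,6],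
  [8,9,10,11,12,13,14,15,16,17,18,19,20,21,22,23,1,2,3,4,5,6,7],
  [9,10,11,12,13,14,15,16,17,18,19,20,21,22,23,1,2,3,4,5,6,7,8],
  [10,11,12,13,14,15,16,17,18,19,20,21,22,23,1,2,3,4,5,6,7,8,9],
  [11,12,13,14,15,16,17,18,19,20,21,22,23,1,2,3,4,5,6,7,8,9,10],
  [12,13,14,15,16,17,18,19,20,21,22,23,1,2,3,4,5,6,7,8,9,10,11],
  [13,14,15,16,17,18,19,20,21,22,23,1,2,3,4,5,6,7,8,9,10,11,12],
  [14,15,16,17,18,19,20,21,22,23,1,2,3,4,5,6,7,8,9,10,11,12,13],
  [15,16,17,18,19,20,21,22,23,1,2,3,4,5,6,7,8,9,10,11,12,13,14],
  [16,17,18,19,20,21,22,23,1,2,3,4,5,6,7,8,9,10,11,12,13,14,15],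
  [17,18,19,20,21,22,23,1,2,3,4,5,6,7,8,9,10,11,12,13,14,15,16],
  [18,19,20,21,22,23,1,2,3,4,5,6,7,8,9,10,11,12,13,14,15,16,17],
  [19,20,21,22,23,1,2,3,4,5,6,7,8,9,10,11,12,13,14,15,16,17,18],
  [20,21,22,23,1,2,3,4,5,6,7,8,9,10,11,12,13,14,15,16,17,18,19],
  [21,22,23,1,2,3,4,5,6,7,8,9,10,11,12,13,14,15,16,17,18,19,20],
  [22,23,1,2,3,4,5,6,7,8,9,10,11,12,13,14,15,16,17,18,19,20,21],
  [23,1,2,3,4,5,6,7,8,9,10,11,12,13,14,15,16,17,18,19,20,21,22]]"

definition SL :: "nat list list" where "SL = [
  [16,17,9,5,19,21,1,10,18,22,4,15,6,11,12,7,2,3,20,14,8,13,23],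
  [1,16,12,3,5,8,17,2,6,11,22,13,18,19,14,9,10,4,21,15,20,7,23],
  [15,11,2,4,7,16,1,5,10,21,12,17,18,13,8,9,3,20,14,19,6,22,23],
  [19,10,12,15,1,9,13,18,6,20,2,3,21,16,17,11,5,22,4,14,7,8,23],
  [14,16,19,5,13,17,22,10,1,6,7,2,20,21,15,9,3,8,18,11,12,4,23],
  [2,5,14,22,3,8,19,10,15,16,11,6,7,1,18,12,17,4,20,21,13,9,23],
  [3,12,20,1,6,17,8,13,14,9,4,5,22,16,10,15,2,18,19,11,7,21,23],
  [9,17,21,3,14,5,10,11,6,1,2,19,13,7,12,22,15,16,8,4,18,20,23],
  [8,12,17,5,19,1,2,20,15,16,10,4,21,3,13,6,7,22,18,9,11,14,23],
  [4,9,20,11,16,17,12,7,8,2,19,13,18,5,21,22,14,10,1,3,6,15,23],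
  [5,16,7,12,13,8,3,4,21,15,9,14,1,17,18,10,6,20,22,2,11,19,23],
  [11,2,7,8,3,21,22,16,10,4,9,19,12,13,5,1,15,17,20,6,14,18,23],
  [14,19,20,15,10,11,5,22,16,21,8,1,2,17,13,4,6,9,18,3,7,12,23],
  [5,6,1,19,20,14,8,2,7,17,10,11,3,22,13,15,18,4,12,16,21,9,23],
  [1,19,14,15,9,3,20,2,12,5,6,21,17,8,10,13,22,7,11,16,4,18,23],
  [18,13,14,8,2,19,1,11,4,5,20,16,7,9,12,21,6,10,15,3,17,22,23],
  [18,19,13,7,1,6,16,9,10,2,21,12,14,17,3,11,15,20,8,22,4,5,23],
  [1,18,12,6,11,21,14,15,7,3,17,19,22,8,16,20,2,13,4,9,10,5,23],
  [17,11,5,10,20,13,14,6,2,16,18,21,7,15,19,1,12,3,8,9,4,22,23],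
  [17,11,16,3,19,20,12,8,22,1,4,13,21,2,7,18,9,14,15,10,5,6,23],
  [17,22,9,2,3,18,14,5,7,10,19,4,8,13,1,15,20,21,16,11,12,6,23],
  [5,15,8,9,1,20,11,13,16,2,10,14,19,7,21,3,4,22,17,18,12,6,23],
  [10,3,4,19,15,6,8,11,20,5,9,14,2,16,21,22,17,12,13,7,1,18,23]]"

definition JL :: "nat list" where "JL = [8,1,2,17,13,4,6,9,18,3,7,12,0,14,19,20,15,10,11,5,22,16,21]"

definition KL :: "nat list" where "KL = [12,1,2,9,5,19,6,10,0,7,17,18,11,4,13,16,21,3,8,14,15,22,20]"

definition TTL :: "nat list list" where "TTL = [
  [22,2,20,13,21,12,7,8,19,10,17,6,4,14,18,16,11,15,9,3,5,1,23],
  [12,2,4,3,19,22,7,8,21,10,18,1,20,14,17,16,15,11,5,13,9,6,23],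
  [9,15,5,4,3,17,21,8,1,10,16,12,18,19,2,11,6,13,14,20,7,22,23],
  [5,21,9,4,1,18,15,8,3,10,14,12,17,11,7,19,13,6,16,20,2,22,23],
  [16,6,7,11,5,2,3,8,9,10,4,19,14,13,22,1,17,18,12,21,20,15,23],
  [14,3,2,21,5,7,6,8,9,10,20,15,16,1,12,13,17,18,22,11,4,19,23],
  [4,13,8,1,11,9,19,3,6,21,5,12,2,14,20,16,17,18,7,15,10,22,23],
  [2,1,17,4,5,8,11,6,9,15,7,21,22,14,10,16,3,19,18,20,12,13,23],
  [20,19,10,15,6,5,13,21,11,3,9,12,7,14,4,16,17,18,2,1,8,22,23],
  [7,11,18,4,5,10,1,15,9,6,2,13,12,14,8,16,19,3,17,20,22,21,23],
  [17,2,14,6,5,4,7,13,9,11,10,12,8,3,16,15,1,21,20,19,18,22,23],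
  [8,2,22,4,15,14,7,1,13,19,12,11,9,6,5,21,17,18,10,20,16,3,23],
  [10,2,12,4,13,16,7,19,15,1,22,3,5,21,9,6,17,18,8,20,14,11,23],
  [18,2,16,19,5,20,7,11,9,13,8,12,10,15,14,3,21,1,4,6,17,22,23]]"

definition PHI1 :: "nat list" where "PHI1 = [19,4,21,2,5,11,20,8,9,10,6,16,15,22,13,12,17,18,1,7,3,14,23]"

definition PHI2 :: "nat list" where "PHI2 = [1,2,15,14,20,21,7,12,4,22,11,18,3,9,13,5,10,8,6,16,19,17,23]"

definition WM :: "nat list list" where "WM = [[1,2,8,21], [11,4,5,1], [18,6,8,2], [21,6,7,0], [7,9,3,1,1], [11,22,5,5,1], [15,0,7,19], [17,20,6,16,7], [15,7,2,0,0], [22,18,1,4,0], [10,14,22,0], [9,14,14,6], [2,21,6,9,0], [4,19,0,1], [10,9,5,5], [8,14,20,12,0]]"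

definition WS :: "nat list list" where "WS = [[2,13,8,7,13,1], [6,9,1,11,3,0], [9,13,12,10,0], [1,13,1,4,3,1], [10,6,4,3,11], [9,2,5,10,11], [11,9,13,11,10], [6,7,8,7,2,1], [6,11,5,8,7], [8,4,12,8,2], [1,12,7,8,3], [4,0,6,1,7], [4,6,3,4,8], [0,6,7,12,13,2], [13,6,10,1,2], [12,4,8,4,13], [5,13,12,9,1,0], [4,7,10,4,3,0], [3,8,7,12,3,0], [5,7,6,2,11], [1,13,11,1,6,0], [4,0,12,8,5], [9,13,6,10,4]]"


section \<open>The groups M23 and M22\<close>

lemma map_eq_pl:
  assumes "map f ID23 = xs" "\<And>x. \<not>(1 \<le> x \<and> x \<le> 23) \<Longrightarrow> f x = x"
  shows "f = pl xs"
proof (rule pl_eqI[where n=23])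
  show "length xs = 23" using assms(1) by (simp flip: assms(1))
  fix x :: nat assume x: "1 \<le> x" "x \<le> 23"
  then have "ID23 ! (x - 1) = x" by (simp add: ID23_upt)
  then show "f x = xs ! (x - 1)" using x by (simp flip: assms(1))
qed (use assms in auto)

lemma LA_eq: "m23_a = pl LA"
proof (rule map_eq_pl)
  have cy: "cycle ID23" by (simp add: ID23_def)
  have r: "map (cycle_of_list ID23) ID23 = rotate1 ID23"
    using cyclic_rotation[OF cy, of 1] by simp
  have r2: "rotate1 ID23 = LA" by (simp add: ID23_def LA_def)
  have e: "m23_a = cycle_of_list ID23" by (simp add: m23_a_def ID23_upt)
  show "map m23_a ID23 = LA" unfolding e r r2 ..
next
  fix x :: nat assume "\<not>(1 \<le> x \<and> x \<le> 23)"
  then show "m23_a x = x" unfolding m23_a_def by (intro id_outside_supp) auto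
qed

lemma LB_eq: "m23_b = pl LB"
proof (rule map_eq_pl)
  show "map m23_b ID23 = LB" by (simp add: m23_b_def ID23_def LB_def)
next
  fix x :: nat assume "\<not>(1 \<le> x \<and> x \<le> 23)"
  then have n: "x \<notin> set [3,17,10,7,9]" "x \<notin> set [4,13,14,19,5]" "x \<notin> set [8,18,11,12,23]"
    "x \<notin> set [15,20,22,21,16]" by auto
  have "cycle_of_list [3,17,10,7,9] x = x" "cycle_of_list [4,13,14,19,5] x = x"
    "cycle_of_list [8,18,11,12,23] x = x" "cycle_of_list [15,20,22,21,16] x = x"
    using id_outside_supp[OF n(1)] id_outside_supp[OF n(2)] id_outside_supp[OF n(3)]
      id_outside_supp[OF n(4)] by auto
  then show "m23_b x = x" unfolding m23_b_def by (simp only: comp_apply)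
qed

lemma a_perm: "m23_a \<in> carrier (sym_group 23)"
proof -
  have e: "{1..<24::nat} = {1..23}" by auto
  show ?thesis unfolding sym_group_carrier m23_a_def
    using cycle_permutes[of "[1..<24::nat]"] by (simp only: set_upt e)
qed

lemma b_perm: "m23_b \<in> carrier (sym_group 23)"
proof -
  have c: "set cs \<subseteq> {1..23} \<Longrightarrow> cycle_of_list cs permutes {1..23}" for cs :: "nat list"
    using cycle_permutes permutes_subset by blast
  show ?thesis unfolding sym_group_carrier m23_b_def
    by (intro permutes_compose c) auto
qed

definition Gab :: "(nat \<Rightarrow> nat) set" where "Gab = generate (sym_group 23) {m23_a, m23_b}"
definition C22 :: "(nat \<Rightarrow> nat) set" where "C22 = {p \<in> Gab. p 23 = 23}"

lemma M22_eq: "M22 = (sym_group 23)\<lparr>carrier := C22\<rparr>"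
  by (simp add: M22_def M23_def Gab_def C22_def)

lemma SG: "group (sym_group 23)" by (rule sym_group_is_group)

lemma Gab_sub: "subgroup Gab (sym_group 23)"
  unfolding Gab_def using a_perm b_perm by (intro group.generate_is_subgroup[OF SG]) auto

lemma Gab_carr: "x \<in> Gab \<Longrightarrow> x \<in> carrier (sym_group 23)"
  using subgroup.subset[OF Gab_sub] by blast

lemma Gab_comp: "x \<in> Gab \<Longrightarrow> y \<in> Gab \<Longrightarrow> x \<circ> y \<in> Gab"
  using subgroup.m_closed[OF Gab_sub] by (simp add: sym_group_def)

lemma Gab_id: "id \<in> Gab"
  using subgroup.one_closed[OF Gab_sub] by (simp add: sym_group_def)

lemma a_Gab: "m23_a \<in> Gab" and b_Gab: "m23_b \<in> Gab"
  unfolding Gab_def by (auto intro: generate.incl)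

lemma C22_sub: "subgroup C22 (sym_group 23)"
proof (rule group.subgroupI[OF SG])
  show "C22 \<subseteq> carrier (sym_group 23)" using Gab_carr by (auto simp: C22_def)
  show "C22 \<noteq> {}" using Gab_id by (auto simp: C22_def)
next
  fix p assume p: "p \<in> C22"
  then have pc: "p \<in> carrier (sym_group 23)" and pG: "p \<in> Gab" and p23: "p 23 = 23"
    using Gab_carr by (auto simp: C22_def)
  have "inv\<^bsub>sym_group 23\<^esub> p \<in> Gab" using subgroup.m_inv_closed[OF Gab_sub pG] .
  moreover have "inv\<^bsub>sym_group 23\<^esub> p = inv' p" using pc by simp
  moreover have "inv' p 23 = 23"
    using pc p23 by (metis inv_f_eq permutes_inj sym_group_carrier)
  ultimately show "inv\<^bsub>sym_group 23\<^esub> p \<in> C22" by (simp add: C22_def)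
next
  fix p q assume "p \<in> C22" "q \<in> C22"
  then show "p \<otimes>\<^bsub>sym_group 23\<^esub> q \<in> C22"
    using Gab_comp by (auto simp: C22_def sym_group_def)
qed

lemma M22_group: "group M22"
  unfolding M22_eq by (rule group.subgroup_imp_group[OF SG C22_sub])

lemma M22_simps [simp]: "carrier M22 = C22" "mult M22 = (\<circ>)" "one M22 = id"
  by (simp_all add: M22_eq sym_group_def)

lemma C22_carr: "x \<in> C22 \<Longrightarrow> x \<in> carrier (sym_group 23)"
  using subgroup.subset[OF C22_sub] by blast

lemma C22_comp: "x \<in> C22 \<Longrightarrow> y \<in> C22 \<Longrightarrow> x \<circ> y \<in> C22"
  using subgroup.m_closed[OF C22_sub] by (simp add: sym_group_def)

lemma C22_id: "id \<in> C22"
  using subgroup.one_closed[OF C22_sub] by (simp add: sym_group_def)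

lemma M22_inv: "x \<in> C22 \<Longrightarrow> inv\<^bsub>M22\<^esub> x = inv\<^bsub>sym_group 23\<^esub> x"
  unfolding M22_eq by (rule group.m_inv_consistent[OF SG C22_sub])

lemma chk_AP: "length AP = 23 \<and> AP ! 0 = ID23 \<and> list_all (\<lambda>k. AP ! Suc k = cl LA (AP ! k)) [0..<22]
   \<and> cl LA (AP ! 22) = ID23 \<and> list_all (\<lambda>k. AP ! k ! 22 = k) [1..<23] \<and> list_all (\<lambda>l. length l = 23) AP"
  by code_simp

lemma chk_S1: "length SL = 23 \<and> length JL = 23 \<and> length KL = 23 \<and> list_all (\<lambda>l. length l = 23 \<and> l ! 22 = 23) SL
   \<and> list_all (\<lambda>k. JL ! k < 23 \<and> KL ! k < 23 \<and> JL ! (KL ! k) = k) [0..<23]"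
  by code_simp

lemma chk_S2: "list_all (\<lambda>k. cl LB (AP ! k) = cl (AP ! (JL ! k)) (SL ! k)) [0..<23]"
  by code_simp

lemma chk_S3: "list_all (\<lambda>k. SL ! k = cl (AP ! ((23 - JL ! k) mod 23)) (cl LB (AP ! k))) [0..<23]"
  by code_simp

lemma chk_TT: "length TTL = 14 \<and> list_all (\<lambda>l. length l = 23 \<and> cl l l = ID23 \<and> l \<noteq> ID23) TTL \<and> distinct TTL"
  by code_simp

lemma chk_WM: "length WM = 16 \<and> list_all (\<lambda>w. list_all (\<lambda>i. i < 23) w) WM \<and>
   wev SL (WM ! 0) = PHI1 \<and> wev SL (WM ! 1) = PHI2 \<and>
   list_all (\<lambda>k. wev SL (WM ! (k + 2)) = TTL ! k) [0..<14]"
  by code_simp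

lemma chk_WS: "length WS = 23 \<and> list_all (\<lambda>w. list_all (\<lambda>i. i < 14) w) WS \<and>
   list_all (\<lambda>k. wev TTL (WS ! k) = SL ! k) [0..<23]"
  by code_simp


definition E1 :: "nat list" where "E1 = [8,16,7,12,20,18,5]"

definition E2 :: "nat list" where "E2 = [10,14,2,22,4,17,9]"

definition E3 :: "nat list" where "E3 = [13,15,21,1,19,6,3,11]"

definition PL :: "nat list list list" where "PL = [[[1,2,4], [1,3,6], [1,5,7], [2,3,7], [2,5,6], [3,4,5], [4,6,7]], [[1,2,4], [1,3,7], [1,5,6], [2,3,5], [2,6,7], [3,4,6], [4,5,7]], [[1,2,5], [1,3,6], [1,4,7], [2,3,4], [2,6,7], [3,5,7], [4,5,6]], [[1,2,5], [1,3,7], [1,4,6], [2,3,6], [2,4,7], [3,4,5], [5,6,7]], [[1,2,6], [1,3,4], [1,5,7], [2,3,5], [2,4,7], [3,6,7], [4,5,6]], [[1,2,6], [1,3,5], [1,4,7], [2,3,7], [2,4,5], [3,4,6], [5,6,7]], [[1,2,7], [1,3,4], [1,5,6], [2,3,6], [2,4,5], [3,5,7], [4,6,7]], [[1,2,7], [1,3,5], [1,4,6], [2,3,4], [2,5,6], [3,6,7], [4,5,7]]]"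

definition SIG1 :: "nat list" where "SIG1 = [1,0,6,4,3,7,2,5]"

definition SIG2 :: "nat list" where "SIG2 = [6,0,4,3,5,2,1,7]"

definition WF :: "nat \<Rightarrow> nat \<Rightarrow> nat \<Rightarrow> nat list" where
 "WF a b c = (if a = 1 then (if b = 2 then (if c = 4 then [] else if c = 5 then [0,1,0,1,1,0] else if c = 6 then [0,1,0,1,0,1,1,0,1,0,1,0] else if c = 7 then [0,1,1,0,1,1,0,1,0,1,0] else []) else if b = 3 then (if c = 4 then [1,0,1,1] else if c = 5 then [1,0,1,1,0,1,0,1,1,0] else if c = 6 then [1,1,0,1,0,1,0,1,1,0,1,0] else if c = 7 then [1,1,0,1,0,1,1,0,1,0,1,0,1] else []) else if b = 4 then (if c = 2 then [0] else if c = 3 then [1,0,1,1,0] else if c = 6 then [1,0,1,0,1,1,0,1,0,1,0] else if c = 7 then [1,1,0,1,1,0,1,0,1,0] else []) else if b = 5 then (if c = 2 then [0,1,0,1,1] else if c = 3 then [1,0,1,1,0,1,0,1,1] else if c = 6 then [0,1,1,0,1,0,1,0,1,1,0,1,0] else if c = 7 then [1,1,0,1,0,1,1,0,1,1,0,1] else []) else if b = 6 then (if c = 2 then [0,1,0,1,0,1,1,0,1,0,1] else if c = 3 then [1,1,0,1,0,1,0,1,1,0,1] else if c = 4 then [1,0,1,0,1,1,0,1,0,1] else if c = 5 then [0,1,1,0,1,0,1,0,1,1,0,1] else []) else if b = 7 then (if c = 2 then [0,1,1,0,1,1,0,1,0,1] else if c = 3 then [1,1,0,1,0,1,1,0,1,0,1,0,1,0]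 else if c = 4 then [1,1,0,1,1,0,1,0,1] else if c = 5 then [1,1,0,1,0,1,1,0,1,1,0,1,0] else []) else []) else if a = 2 then (if b = 1 then (if c = 4 then [0,1,0,1,1,0,1,0,1,0,1,1,0,1] else if c = 5 then [1,0,1,0,1,1,0,1] else if c = 6 then [1,1,0,1,0,1,1,0,1,1] else if c = 7 then [0,1,0,1,0,1,0,1,1,0,1,0,1] else []) else if b = 3 then (if c = 4 then [1,0,1,1,0,1,1,0,1,0] else if c = 5 then [1,0,1,1,0,1,0,1,0,1,0] else if c = 6 then [1,1,0,1,0,1] else if c = 7 then [0,1,0,1,1,0,1,1,0,1,0,1] else []) else if b = 4 then (if c = 1 then [0,1,0,1,1,0,1,0,1,0,1,1,0,1,0] else if c = 3 then [1,0,1,1,0,1,1,0,1] else if c = 5 then [0,1,1,0,1,1,0,1,0,1,1] else if c = 7 then [0,1,0,1,0,1,1] else []) else if b = 5 then (if c = 1 then [1,0,1,0,1,1,0,1,0] else if c = 3 then [1,0,1,1,0,1,0,1,0,1] else if c = 4 then [0,1,1,0,1,1,0,1,0,1,1,0] else if c = 6 then [0,1,1,0,1,1] else []) else if b = 6 then (if c = 1 then [1,1,0,1,0,1,1,0,1,1,0] else if c = 3 then [1,1,0,1,0,1,0] else if c = 5 then [0,1,1,0,1,1,0] else if c = 7 then [0,1,0] else []) else if b = 7 then (if c = 1 then [1,0,1,0,1,1,0,1,0,1,0,1,1] else if c = 3 then [0,1,0,1,1,0,1,1,0,1,0,1,0] else if c = 4 then [0,1,0,1,0,1,1,0] else if c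 = 6 then [0,1] else []) else []) else if a = 3 then (if b = 1 then (if c = 4 then [0,1,1,0,1,0,1,0,1,1] else if c = 5 then [1,1,0,1,1,0,1] else if c = 6 then [1,1,0,1,1,0,1,0,1,0,1,1,0] else if c = 7 then [1,0,1,0,1,0,1,1,0,1,1] else []) else if b = 2 then (if c = 4 then [0,1,1,0,1,0] else if c = 5 then [0,1,0,1,0,1,0] else if c = 6 then [0,1,0,1,0,1,1,0,1,1,0] else if c = 7 then [1,0,1,0,1,0,1] else []) else if b = 4 then (if c = 1 then [0,1,1,0,1,0,1,0,1,1,0] else if c = 2 then [0,1,1,0,1] else if c = 5 then [1,1,0,1,0,1,0,1,1,0,1,1] else if c = 6 then [1,0,1,1,0,1,0,1,0,1,1] else []) else if b = 5 then (if c = 1 then [1,1,0,1,1,0,1,0] else if c = 2 then [0,1,0,1,0,1] else if c = 4 then [1,1,0,1,0,1,0,1,1,0,1,1,0] else if c = 7 then [1,1,0,1,0,1,0,1,0] else []) else if b = 6 then (if c = 1 then [1,1,0,1,1,0,1,0,1,0,1,1] else if c = 2 then [0,1,0,1,0,1,1,0,1,1] else if c = 4 then [1,0,1,1,0,1,0,1,0,1,1,0] else if c = 7 then [1,0,1,1,0,1] else []) else if b = 7 then (if c = 1 then [1,0,1,0,1,0,1,1,0,1,1,0] else if c = 2 then [1,0,1,0,1,0,1,0] else if c = 5 then [1,1,0,1,0,1,0,1] else if c = 6 then [1,0,1,1,0,1,0] else []) else []) else if a = 4 then (if b = 1 then (if c = 2 then [1,0,1,1,0,1,0,1,0,1,1,0,1]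 else if c = 3 then [0,1,0,1,0,1,1,0,1] else if c = 6 then [1,1,0,1,0,1,1,0,1,0,1] else if c = 7 then [1,0,1,0,1,0,1,1,0,1,0,1] else []) else if b = 2 then (if c = 1 then [1,0,1,1,0,1,0,1,0,1,1,0,1,0] else if c = 3 then [1,1,0,1,1,0,1,0,1,1] else if c = 5 then [0,1,0,1,1,0,1,1,0,1] else if c = 7 then [1,0,1,0,1,1] else []) else if b = 3 then (if c = 1 then [0,1,0,1,0,1,1,0,1,0] else if c = 2 then [1,1,0,1,1,0,1,0,1,1,0] else if c = 5 then [0,1,0,1,1,0,1,0,1,0,1] else if c = 6 then [1,1,0,1,1] else []) else if b = 5 then (if c = 2 then [0,1,0,1,1,0,1,1,0,1,0] else if c = 3 then [0,1,0,1,1,0,1,0,1,0,1,0] else if c = 6 then [0,1,1,0,1,0,1] else if c = 7 then [1,0,1,1,0,1,1,0,1,0,1] else []) else if b = 6 then (if c = 1 then [1,1,0,1,0,1,1,0,1,0,1,0] else if c = 3 then [1,1,0,1,1,0] else if c = 5 then [0,1,1,0,1,0,1,0] else if c = 7 then [1,0] else []) else if b = 7 then (if c = 1 then [1,0,1,0,1,0,1,1,0,1,0,1,0] else if c = 2 then [1,0,1,0,1,1,0] else if c = 5 then [1,0,1,1,0,1,1,0,1,0,1,0] else if c = 6 then [1] else []) else []) else if a = 5 then (if b = 1 then (if c = 2 then [1,1,0,1,0,1,0,1,1] else if c = 3 then [0,1,1,0,1,1,0,1] else if c = 6 then [0,1,1,0,1,1,0,1,0,1,0,1,1,0] else if c =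 7 then [0,1,0,1,0,1,0,1,1,0,1,1] else []) else if b = 2 then (if c = 1 then [1,1,0,1,0,1,0,1,1,0] else if c = 3 then [0,1,1,0,1,0,1,0,1,1,0,1,1] else if c = 4 then [1,1,0,1] else if c = 6 then [0,1,0,1,1,0,1,0,1,0,1,1] else []) else if b = 3 then (if c = 1 then [0,1,1,0,1,1,0,1,0] else if c = 2 then [0,1,1,0,1,0,1,0,1,1,0,1,1,0] else if c = 4 then [1,0,1,0,1] else if c = 7 then [0,1,1,0,1,0,1,0,1,0] else []) else if b = 4 then (if c = 2 then [1,1,0,1,0] else if c = 3 then [1,0,1,0,1,0] else if c = 6 then [1,0,1,0,1,1,0,1,1,0] else if c = 7 then [0,1,0,1,0,1,0,1] else []) else if b = 6 then (if c = 1 then [0,1,1,0,1,1,0,1,0,1,0,1,1] else if c = 2 then [0,1,0,1,1,0,1,0,1,0,1,1,0] else if c = 4 then [1,0,1,0,1,1,0,1,1] else if c = 7 then [0,1,0,1,1,0,1] else []) else if b = 7 then (if c = 1 then [0,1,0,1,0,1,0,1,1,0,1,1,0] else if c = 3 then [0,1,1,0,1,0,1,0,1] else if c = 4 then [1,1,0,1,1,0,1,1] else if c = 6 then [0,1,0,1,1,0,1,0] else []) else []) else if a = 6 then (if b = 1 then (if c = 2 then [1,0,1,1,0,1,0,1,0] else if c = 3 then [0,1,1,0] else if c = 4 then [0,1,0,1,1,0,1,0,1,0] else if c = 5 then [1,1,0] else []) else if b = 2 then (if c = 1 then [1,0,1,1,0,1,0,1] else if c = 3 then [1,0,1,0,1,1,0,1,0,1,0,1,0]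 else if c = 5 then [0,1,0,1,0,1,0,1,1,0,1] else if c = 7 then [1,0,1,0,1,1,0,1,1,0,1,0] else []) else if b = 3 then (if c = 1 then [0,1,1] else if c = 2 then [1,0,1,0,1,1,0,1,0,1,0,1] else if c = 4 then [1,0,1,0,1,0,1,1,0,1,0] else if c = 7 then [0,1,1,0,1,0,1,1,0] else []) else if b = 4 then (if c = 1 then [0,1,0,1,1,0,1,0,1] else if c = 3 then [1,0,1,0,1,0,1,1,0,1] else if c = 5 then [1,1,0,1,0,1,0,1,1,0,1,0,1] else if c = 7 then [0,1,0,1,0,1,1,0,1,1,0,1,0] else []) else if b = 5 then (if c = 1 then [1,1] else if c = 2 then [0,1,0,1,0,1,0,1,1,0,1,0] else if c = 4 then [0,1,0,1,0,1,1,0,1,0,1,0,1] else if c = 7 then [1,1,0,1,0,1,1,0] else []) else if b = 7 then (if c = 2 then [1,0,1,0,1,1,0,1,1,0,1] else if c = 3 then [0,1,1,0,1,0,1,1] else if c = 4 then [0,1,0,1,0,1,1,0,1,1,0,1] else if c = 5 then [1,1,0,1,0,1,1] else []) else []) else if a = 7 then (if b = 1 then (if c = 2 then [1,0,1,1,0,1,1,0] else if c = 3 then [0,1,0,1,0] else if c = 4 then [0,1,0,1,1,0,1,1,0] else if c = 5 then [1,0,1,0] else []) else if b = 2 then (if c = 1 then [1,0,1,1,0,1,1] else if c = 3 then [1,1,0,1,1,0,1,0,1,0,1] else if c = 4 then [1,1,0,1,0,1,1,0,1,0] else if c = 6 then [1,0,1,1,0,1,1,0,1,0,1,1,0] else [])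 else if b = 3 then (if c = 1 then [0,1,0,1] else if c = 2 then [1,1,0,1,1,0,1,0,1,0,1,0] else if c = 5 then [1,0,1,0,1,1,0,1,1,0,1,0,1] else if c = 6 then [0,1,0,1,0,1,0,1,1,0] else []) else if b = 4 then (if c = 1 then [0,1,0,1,1,0,1,1] else if c = 2 then [1,1,0,1,0,1,1,0,1] else if c = 5 then [0,1,1,0,1,1,0,1,0,1,0,1] else if c = 6 then [0,1,0,1,1,0,1,1,0,1,0,1,1,0] else []) else if b = 5 then (if c = 1 then [1,0,1] else if c = 3 then [1,0,1,0,1,1,0,1,1,0,1,0,1,0] else if c = 4 then [0,1,1,0,1,1,0,1,0,1,0,1,0] else if c = 6 then [1,0,1,0,1,0,1,1,0] else []) else if b = 6 then (if c = 2 then [1,0,1,1,0,1,1,0,1,0,1,1] else if c = 3 then [0,1,0,1,0,1,0,1,1] else if c = 4 then [0,1,0,1,1,0,1,1,0,1,0,1,1] else if c = 5 then [1,0,1,0,1,0,1,1] else []) else []) else [])"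


section \<open>The group L32\<close>

definition xr :: "nat \<Rightarrow> nat \<Rightarrow> nat" where
 "xr a b = (if a = 0 then (if b = 0 then 0 else if b = 1 then 1 else if b = 2 then 2 else if b = 3 then 3 else if b = 4 then 4 else if b = 5 then 5 else if b = 6 then 6 else 7) else if a = 1 then (if b = 0 then 1 else if b = 1 then 0 else if b = 2 then 3 else if b = 3 then 2 else if b = 4 then 5 else if b = 5 then 4 else if b = 6 then 7 else 6) else if a = 2 then (if b = 0 then 2 else if b = 1 then 3 else if b = 2 then 0 else if b = 3 then 1 else if b = 4 then 6 else if b = 5 then 7 else if b = 6 then 4 else 5) else if a = 3 then (if b = 0 then 3 else if b = 1 then 2 else if b = 2 then 1 else if b = 3 then 0 else if b = 4 then 7 else if b = 5 then 6 else if b = 6 then 5 else 4) else if a = 4 then (if b = 0 then 4 else if b = 1 then 5 else if b = 2 then 6 else if b = 3 then 7 else if b = 4 then 0 else if b = 5 then 1 else if b = 6 then 2 else 3) else if a = 5 then (if b = 0 then 5 else if b = 1 then 4 else if b = 2 then 7 else if b = 3 then 6 else if b = 4 then 1 else if b = 5 then 0 else if b = 6 then 3 else 2) else if a = 6 then (if b = 0 then 6 else if b = 1 then 7 else if b = 2 then 4 else if b = 3 then 5 else if b = 4 then 2 else if b = 5 then 3 else if b = 6 then 0 else 1) else if a = 7 then (if b = 0 then 7 else if b = 1 then 6 else if b = 2 then 5 else if b = 3 then 4 else if b = 4 then 3 else if b = 5 then 2 else if b = 6 then 1 else 0) else 0)"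

lemma xr_eq_all: "\<forall>a\<in>{0,1,2,3,4,5,6,7::nat}. \<forall>b\<in>{0,1,2,3,4,5,6,7::nat}. xor a b = xr a b"
  by (simp add: xr_def)

definition lin :: "nat \<Rightarrow> nat \<Rightarrow> nat \<Rightarrow> nat \<Rightarrow> nat" where
 "lin a b c v = (if v = 1 then a else if v = 2 then b else if v = 3 then xr a b
    else if v = 4 then c else if v = 5 then xr a c else if v = 6 then xr b c
    else if v = 7 then xr (xr a b) c else v)"

definition tapp :: "nat \<times> nat \<times> nat \<Rightarrow> nat \<times> nat \<times> nat \<Rightarrow> nat \<times> nat \<times> nat" where
 "tapp g t = (case g of (a,b,c) \<Rightarrow> case t of (x,y,z) \<Rightarrow> (lin a b c x, lin a b c y, lin a b c z))"

definition linT :: "nat \<times> nat \<times> nat \<Rightarrow> nat \<Rightarrow> nat" where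
 "linT t = (case t of (a,b,c) \<Rightarrow> lin a b c)"

definition gsel :: "nat \<Rightarrow> nat \<times> nat \<times> nat" where "gsel i = (if i = 0 then (1,4,2) else (4,7,6))"

definition tw :: "nat list \<Rightarrow> nat \<times> nat \<times> nat" where
 "tw w = foldr (\<lambda>i t. tapp (gsel i) t) w (1,2,4)"

definition valid :: "nat \<Rightarrow> nat \<Rightarrow> nat \<Rightarrow> bool" where
 "valid a b c \<longleftrightarrow> a \<in> {1..7} \<and> b \<in> {1..7} \<and> c \<in> {1..7} \<and> a \<noteq> b \<and> c \<noteq> a \<and> c \<noteq> b \<and> c \<noteq> xr a b"

lemma L32_simps [simp]: "mult L32 = (\<circ>)" "one L32 = id"
  by (simp_all add: L32_def)

lemma L32_carrier: "p \<in> carrier L32 \<longleftrightarrow> p permutes {1..7} \<and>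
   (\<forall>x\<in>{0..7}. \<forall>y\<in>{0..7}. p (xor x y) = xor (p x) (p y))"
  by (simp add: L32_def)

lemma set07: "{0..7::nat} = {0,1,2,3,4,5,6,7}" by auto
lemma set17: "{1..7::nat} = {1,2,3,4,5,6,7}" by auto

lemma xr_eq: "a \<in> {0..7} \<Longrightarrow> b \<in> {0..7} \<Longrightarrow> xor a b = xr a b"
  using xr_eq_all unfolding set07 by blast

lemma xor_bound: "x \<in> {0..7} \<Longrightarrow> y \<in> {0..7} \<Longrightarrow> xor x y \<in> {0..(7::nat)}"
proof -
  have "\<forall>x\<in>{0..7::nat}. \<forall>y\<in>{0..7::nat}. xor x y \<in> {0..7}" unfolding set07 by simp
  then show "x \<in> {0..7} \<Longrightarrow> y \<in> {0..7} \<Longrightarrow> xor x y \<in> {0..(7::nat)}" by blast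
qed

lemma L32_perm: "p \<in> carrier L32 \<Longrightarrow> p permutes {1..7}" by (simp add: L32_carrier)

lemma L32_lin: "p \<in> carrier L32 \<Longrightarrow> x \<in> {0..7} \<Longrightarrow> y \<in> {0..7} \<Longrightarrow> p (xor x y) = xor (p x) (p y)"
  by (simp add: L32_carrier)

lemma L32_0: "p \<in> carrier L32 \<Longrightarrow> p 0 = 0"
  using L32_perm permutes_not_in by fastforce

lemma L32_out: "p \<in> carrier L32 \<Longrightarrow> v \<notin> {1..7} \<Longrightarrow> p v = v"
  using L32_perm permutes_not_in by fastforce

lemma L32_range: "p \<in> carrier L32 \<Longrightarrow> v \<in> {1..7} \<Longrightarrow> p v \<in> {1..7}"
  using L32_perm permutes_in_image by fastforce

lemma L32_range0: "p \<in> carrier L32 \<Longrightarrow> v \<in> {0..7} \<Longrightarrow> p v \<in> {0..7}"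
proof -
  assume p: "p \<in> carrier L32" and v: "v \<in> {0..7}"
  show ?thesis
  proof (cases "v = 0")
    case True then show ?thesis using L32_0[OF p] by simp
  next
    case False then have "v \<in> {1..7}" using v by auto
    then show ?thesis using L32_range[OF p] by fastforce
  qed
qed

lemma lin_repr: assumes p: "p \<in> carrier L32" shows "p = lin (p 1) (p 2) (p 4)"
proof
  fix v :: nat
  have x12: "xor 1 2 = (3::nat)" "xor 1 4 = (5::nat)" "xor 2 4 = (6::nat)" "xor 3 4 = (7::nat)" by simp_all
  have r: "p 1 \<in> {0..7}" "p 2 \<in> {0..7}" "p 4 \<in> {0..7}" "p 3 \<in> {0..7}"
    using L32_range0[OF p] by auto
  have p3: "p 3 = xr (p 1) (p 2)" using L32_lin[OF p, of 1 2] x12 xr_eq r by simp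
  have p5: "p 5 = xr (p 1) (p 4)" using L32_lin[OF p, of 1 4] x12 xr_eq r by simp
  have p6: "p 6 = xr (p 2) (p 4)" using L32_lin[OF p, of 2 4] x12 xr_eq r by simp
  have p7: "p 7 = xr (p 3) (p 4)" using L32_lin[OF p, of 3 4] x12 xr_eq r by simp
  show "p v = lin (p 1) (p 2) (p 4) v"
  proof (cases "v \<in> {1..7}")
    case True
    then have "v = 1 \<or> v = 2 \<or> v = 3 \<or> v = 4 \<or> v = 5 \<or> v = 6 \<or> v = 7" by auto
    then show ?thesis using p3 p5 p6 p7 by (auto simp: lin_def)
  next
    case False
    then show ?thesis using L32_out[OF p False] by (auto simp: lin_def)
  qed
qed

lemma L32_valid: assumes p: "p \<in> carrier L32" shows "valid (p 1) (p 2) (p 4)"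
proof -
  have inj: "inj p" using L32_perm[OF p] permutes_inj by blast
  have "p 3 = xr (p 1) (p 2)" using lin_repr[OF p] by (metis lin_def numeral_eq_iff semiring_norm(84,85,86,88,89) numeral_eq_one_iff)
  moreover have "p 4 \<noteq> p 3" "p 1 \<noteq> p 2" "p 4 \<noteq> p 1" "p 4 \<noteq> p 2"
    by (simp_all add: inj_eq[OF inj])
  moreover have "p 1 \<in> {1..7}" "p 2 \<in> {1..7}" "p 4 \<in> {1..7}" using L32_range[OF p] by auto
  ultimately show ?thesis by (auto simp: valid_def)
qed

lemma L32_eq: "L32 = (sym_group 7)\<lparr>carrier := carrier L32\<rparr>"
  by (simp add: L32_def sym_group_def)

lemma L32_sub: "subgroup (carrier L32) (sym_group 7)"
proof (rule group.subgroupI[OF sym_group_is_group])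
  show "carrier L32 \<subseteq> carrier (sym_group 7)" by (auto simp: sym_group_carrier L32_carrier)
  have "id \<in> carrier L32" by (simp add: L32_carrier permutes_id)
  then show "carrier L32 \<noteq> {}" by blast
next
  fix p assume p: "p \<in> carrier L32"
  then have ps: "p permutes {1..7}" by (rule L32_perm)
  have ip: "inv' p permutes {1..7}" using permutes_inv[OF ps] .
  have r: "inv' p v \<in> {0..7}" if "v \<in> {0..7}" for v
  proof (cases "v = 0")
    case True then show ?thesis using permutes_not_in[OF ip] by simp
  next
    case False then have "v \<in> {1..7}" using that by auto
    then show ?thesis using permutes_in_image[OF ip] by fastforce
  qed
  have "inv' p (xor x y) = xor (inv' p x) (inv' p y)" if "x \<in> {0..7}" "y \<in> {0..7}" for x y
  proof -
    have "p (xor (inv' p x) (inv' p y)) = xor (p (inv' p x)) (p (inv' p y))"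
      using L32_lin[OF p r[OF that(1)] r[OF that(2)]] .
    also have "\<dots> = xor x y" using permutes_inverses(1)[OF ps] by simp
    finally have "p (xor (inv' p x) (inv' p y)) = xor x y" .
    then show ?thesis using permutes_inverses(2)[OF ps] by metis
  qed
  then have "inv' p \<in> carrier L32" using ip by (simp add: L32_carrier)
  moreover have "inv\<^bsub>sym_group 7\<^esub> p = inv' p"
    using ps by (simp add: sym_group_carrier)
  ultimately show "inv\<^bsub>sym_group 7\<^esub> p \<in> carrier L32" by simp
next
  fix p q assume p: "p \<in> carrier L32" and q: "q \<in> carrier L32"
  have "(p \<circ> q) permutes {1..7}" by (rule permutes_compose[OF L32_perm[OF q] L32_perm[OF p]])
  moreover have "(p \<circ> q) (xor x y) = xor ((p \<circ> q) x) ((p \<circ> q) y)" if "x \<in> {0..7}" "y \<in> {0..7}" for x y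
    using L32_lin[OF q that] L32_lin[OF p L32_range0[OF q that(1)] L32_range0[OF q that(2)]] by simp
  ultimately show "p \<otimes>\<^bsub>sym_group 7\<^esub> q \<in> carrier L32" by (simp add: L32_carrier sym_group_def)
qed

lemma L32_group: "group L32"
  by (subst L32_eq, rule group.subgroup_imp_group[OF sym_group_is_group L32_sub])

lemma L32_comp: "p \<in> carrier L32 \<Longrightarrow> q \<in> carrier L32 \<Longrightarrow> p \<circ> q \<in> carrier L32"
  using monoid.m_closed[OF group.is_monoid[OF L32_group]] by fastforce

lemma L32_id: "id \<in> carrier L32"
  using monoid.one_closed[OF group.is_monoid[OF L32_group]] by fastforce

lemma lin_124: "lin 1 2 4 = id" by (auto simp: fun_eq_iff lin_def xr_def)

lemma lin_tapp:
  assumes g: "linT g \<in> carrier L32" and t: "linT t \<in> carrier L32"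
  shows "linT (tapp g t) = linT g \<circ> linT t"
proof -
  have c: "linT g \<circ> linT t \<in> carrier L32" using L32_comp[OF g t] .
  obtain a b c where gg: "g = (a,b,c)" by (cases g) auto
  obtain x y z where tt: "t = (x,y,z)" by (cases t) auto
  have "linT g \<circ> linT t = lin ((linT g \<circ> linT t) 1) ((linT g \<circ> linT t) 2) ((linT g \<circ> linT t) 4)"
    by (rule lin_repr[OF c])
  also have "\<dots> = linT (tapp g t)" by (simp add: gg tt linT_def tapp_def lin_def)
  finally show ?thesis by simp
qed



section \<open>The embedding phi\<close>

fun idx :: "nat list \<Rightarrow> nat \<Rightarrow> nat" where
  "idx [] x = 0"
| "idx (y # ys) x = (if y = x then 0 else Suc (idx ys x))"

lemma idx_in: "x \<in> set xs \<Longrightarrow> idx xs x < length xs \<and> xs ! idx xs x = x"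
  by (induction xs) auto

lemma idx_nth: "distinct xs \<Longrightarrow> i < length xs \<Longrightarrow> idx xs (xs ! i) = i"
proof (induction xs arbitrary: i)
  case Nil then show ?case by simp
next
  case (Cons y ys) then show ?case by (cases i) auto
qed

definition img :: "(nat \<Rightarrow> nat) \<Rightarrow> nat list list \<Rightarrow> nat list list" where
  "img p F = sort (map (\<lambda>l. sort (map p l)) F)"

definition rho :: "(nat \<Rightarrow> nat) \<Rightarrow> nat \<Rightarrow> nat" where
  "rho p i = (THE j. j < 8 \<and> img p (PL ! i) = PL ! j)"

definition phi :: "(nat \<Rightarrow> nat) \<Rightarrow> nat \<Rightarrow> nat" where
 "phi p x = (if x \<in> set E1 then E1 ! (p (Suc (idx E1 x)) - 1)
   else if x \<in> set E2 then E2 ! (p (Suc (idx E2 x)) - 1)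
   else if x \<in> set E3 then E3 ! rho p (idx E3 x) else x)"

definition good :: "(nat \<Rightarrow> nat) \<Rightarrow> bool" where
  "good p \<longleftrightarrow> p \<in> carrier L32 \<and> (\<forall>i<8. \<exists>j<8. img p (PL ! i) = PL ! j)"

lemma chk_E: "length E1 = 7 \<and> length E2 = 7 \<and> length E3 = 8 \<and> distinct (E1 @ E2 @ E3)
   \<and> length PL = 8 \<and> distinct PL \<and> list_all (\<lambda>F. img id F = F) PL"
  by (simp add: E1_def E2_def E3_def PL_def img_def)

lemma sort_mset_eq: "mset xs = mset ys \<Longrightarrow> sort xs = sort ys"
  by (metis mset_sort properties_for_sort sorted_sort)

lemma sort_map_sort: "sort (map f (sort xs)) = sort (map f xs)"
  by (rule sort_mset_eq) simp

lemma img_comp: "img (p \<circ> q) F = img p (img q F)"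
proof -
  have i: "sort (map p (sort (map q l))) = sort (map (p \<circ> q) l)" for l
    by (simp add: sort_map_sort)
  have "img p (img q F) = sort (map (\<lambda>l. sort (map p l)) (map (\<lambda>l. sort (map q l)) F))"
    unfolding img_def by (rule sort_map_sort)
  also have "\<dots> = img (p \<circ> q) F" unfolding img_def by (simp add: i comp_def)
  finally show ?thesis by simp
qed

lemma img_id: "i < 8 \<Longrightarrow> img id (PL ! i) = PL ! i"
  using chk_E by (auto simp: list_all_iff)

lemma PL_inj: "i < 8 \<Longrightarrow> j < 8 \<Longrightarrow> PL ! i = PL ! j \<Longrightarrow> i = j"
  using chk_E nth_eq_iff_index_eq by metis

lemma rho_eq: "j < 8 \<Longrightarrow> img p (PL ! i) = PL ! j \<Longrightarrow> rho p i = j"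
  unfolding rho_def by (rule the_equality) (auto intro: PL_inj)

lemma good_rho: "good p \<Longrightarrow> i < 8 \<Longrightarrow> rho p i < 8 \<and> img p (PL ! i) = PL ! rho p i"
  unfolding good_def using rho_eq by metis

lemma good_comp: "good p \<Longrightarrow> good q \<Longrightarrow> good (p \<circ> q)"
  unfolding good_def using L32_comp img_comp by metis

lemma good_id: "good id"
  unfolding good_def using L32_id img_id by blast

lemma rho_comp: assumes "good p" "good q" "i < 8" shows "rho (p \<circ> q) i = rho p (rho q i)"
proof -
  have "img (p \<circ> q) (PL ! i) = PL ! rho p (rho q i)"
    using good_rho[OF assms(2,3)] good_rho[OF assms(1)] img_comp by metis
  then show ?thesis using good_rho[OF assms(1)] good_rho[OF assms(2,3)] rho_eq by metis
qed

lemma rho_id: "i < 8 \<Longrightarrow> rho id i = i"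
  using rho_eq img_id by blast

lemma E_facts: "length E1 = 7" "length E2 = 7" "length E3 = 8" "distinct E1" "distinct E2" "distinct E3"
  "set E1 \<inter> set E2 = {}" "set E1 \<inter> set E3 = {}" "set E2 \<inter> set E3 = {}"
  using chk_E by auto

lemma phi_E1: "x \<in> set E1 \<Longrightarrow> phi p x = E1 ! (p (Suc (idx E1 x)) - 1)"
  by (simp add: phi_def)
lemma phi_E2: "x \<in> set E2 \<Longrightarrow> phi p x = E2 ! (p (Suc (idx E2 x)) - 1)"
  using E_facts by (auto simp: phi_def)
lemma phi_E3: "x \<in> set E3 \<Longrightarrow> phi p x = E3 ! rho p (idx E3 x)"
  using E_facts by (auto simp: phi_def)
lemma phi_out: "x \<notin> set E1 \<Longrightarrow> x \<notin> set E2 \<Longrightarrow> x \<notin> set E3 \<Longrightarrow> phi p x = x"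
  by (simp add: phi_def)

lemma E7_step:
  assumes E: "length E = 7" "distinct E" and p: "p \<in> carrier L32" and x: "x \<in> set E"
  shows "E ! (p (Suc (idx E x)) - 1) \<in> set E \<and> Suc (idx E (E ! (p (Suc (idx E x)) - 1))) = p (Suc (idx E x))"
proof -
  have "idx E x < 7" using idx_in[OF x] E by simp
  then have "Suc (idx E x) \<in> {1..7}" by auto
  then have r: "p (Suc (idx E x)) \<in> {1..7}" using L32_range[OF p] by blast
  then have i: "p (Suc (idx E x)) - 1 < length E" using E by auto
  show ?thesis using idx_nth[OF E(2) i] i r by auto
qed

lemma phi_comp: assumes p: "good p" and q: "good q" shows "phi (p \<circ> q) = phi p \<circ> phi q"
proof
  fix x
  have pc: "p \<in> carrier L32" and qc: "q \<in> carrier L32" using p q by (auto simp: good_def)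
  show "phi (p \<circ> q) x = (phi p \<circ> phi q) x"
  proof (cases "x \<in> set E1")
    case True
    note s = E7_step[OF E_facts(1,4) qc True]
    show ?thesis using True s phi_E1[of _ p] by (simp add: phi_E1)
  next
    case n1: False
    show ?thesis
    proof (cases "x \<in> set E2")
      case True
      note s = E7_step[OF E_facts(2,5) qc True]
      show ?thesis using True s by (simp add: phi_E2)
    next
      case n2: False
      show ?thesis
      proof (cases "x \<in> set E3")
        case True
        have ix: "idx E3 x < 8" using idx_in[OF True] E_facts by simp
        have r: "rho q (idx E3 x) < 8" using good_rho[OF q ix] by simp
        have m: "E3 ! rho q (idx E3 x) \<in> set E3" using r E_facts by simp
        have ii: "idx E3 (E3 ! rho q (idx E3 x)) = rho q (idx E3 x)"
          using idx_nth[OF E_facts(6)] r E_facts by simp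
        show ?thesis using True m ii rho_comp[OF p q ix] by (simp add: phi_E3)
      next
        case False
        then show ?thesis using n1 n2 by (simp add: phi_out)
      qed
    qed
  qed
qed

lemma phi_id: "phi id = id"
proof
  fix x
  show "phi id x = id x"
  proof (cases "x \<in> set E1")
    case True then show ?thesis using idx_in[OF True] by (simp add: phi_E1)
  next
    case n1: False
    show ?thesis
    proof (cases "x \<in> set E2")
      case True then show ?thesis using idx_in[OF True] by (simp add: phi_E2)
    next
      case n2: False
      show ?thesis
      proof (cases "x \<in> set E3")
        case True
        have "idx E3 x < 8" using idx_in[OF True] E_facts by simp
        then show ?thesis using True idx_in[OF True] by (simp add: phi_E3 rho_id)
      qed (use n1 n2 in \<open>simp add: phi_out\<close>)
    qed
  qed
qed

lemma phi_inj: assumes p: "p \<in> carrier L32" and q: "q \<in> carrier L32" and e: "phi p = phi q"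
  shows "p = q"
proof -
  have "p v = q v" if v: "v \<in> {1..7}" for v
  proof -
    have i: "v - 1 < length E1" using v E_facts by auto
    have x: "E1 ! (v - 1) \<in> set E1" using i by simp
    have s: "Suc (idx E1 (E1 ! (v - 1))) = v" using idx_nth[OF E_facts(4) i] v by auto
    have "E1 ! (p v - 1) = E1 ! (q v - 1)" using fun_cong[OF e, of "E1 ! (v - 1)"] x s by (simp add: phi_E1)
    moreover have "p v - 1 < length E1" "q v - 1 < length E1"
      using L32_range[OF p v] L32_range[OF q v] E_facts by auto
    ultimately have "p v - 1 = q v - 1" using E_facts(4) nth_eq_iff_index_eq by blast
    then show ?thesis using L32_range[OF p v] L32_range[OF q v] by auto
  qed
  then have "p 1 = q 1" "p 2 = q 2" "p 4 = q 4" by auto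
  then show ?thesis using lin_repr[OF p] lin_repr[OF q] by metis
qed



lemma AP_facts: "length AP = 23" "AP ! 0 = ID23" "\<And>k. k < 22 \<Longrightarrow> AP ! Suc k = cl LA (AP ! k)"
  "cl LA (AP ! 22) = ID23" "\<And>k. 1 \<le> k \<Longrightarrow> k < 23 \<Longrightarrow> AP ! k ! 22 = k"
  "\<And>k. k < 23 \<Longrightarrow> length (AP ! k) = 23"
  using chk_AP by (auto simp: list_all_iff)

lemma LA_len: "length LA = 23" and LB_len: "length LB = 23"
  by (simp_all add: LA_def LB_def)

lemma AP_Gab: "k < 23 \<Longrightarrow> pl (AP ! k) \<in> Gab"
proof (induction k)
  case 0 then show ?case by (simp only: AP_facts(2) pl_ID23 Gab_id)
next
  case (Suc k)
  then have "pl (AP ! Suc k) = m23_a \<circ> pl (AP ! k)"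
    using AP_facts(3)[of k] pl_comp[of LA "AP ! k"] LA_len AP_facts(6)[of k] LA_eq by simp
  moreover have "pl (AP ! k) \<in> Gab" using Suc by simp
  ultimately show ?case using Gab_comp a_Gab by metis
qed

lemma S_facts: "length SL = 23" "\<And>k. k < 23 \<Longrightarrow> length (SL ! k) = 23 \<and> SL ! k ! 22 = 23"
  "\<And>k. k < 23 \<Longrightarrow> JL ! k < 23 \<and> KL ! k < 23 \<and> JL ! (KL ! k) = k"
  "\<And>k. k < 23 \<Longrightarrow> cl LB (AP ! k) = cl (AP ! (JL ! k)) (SL ! k)"
  "\<And>k. k < 23 \<Longrightarrow> SL ! k = cl (AP ! ((23 - JL ! k) mod 23)) (cl LB (AP ! k))"
  using chk_S1 chk_S2 chk_S3 by (auto simp: list_all_iff)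

lemma SL_Gab: assumes k: "k < 23" shows "pl (SL ! k) \<in> Gab"
proof -
  have m: "(23 - JL ! k) mod 23 < 23" by simp
  have e1: "pl (cl LB (AP ! k)) = m23_b \<circ> pl (AP ! k)"
    using pl_comp[of LB "AP ! k"] AP_facts(6)[OF k] LB_len LB_eq by simp
  have e2: "pl (cl (AP ! ((23 - JL ! k) mod 23)) (cl LB (AP ! k))) = pl (AP ! ((23 - JL ! k) mod 23)) \<circ> pl (cl LB (AP ! k))"
    using pl_comp[of "AP ! ((23 - JL ! k) mod 23)" "cl LB (AP ! k)"] AP_facts(6)[OF m] AP_facts(6)[OF k] by simp
  have "pl (SL ! k) = pl (AP ! ((23 - JL ! k) mod 23)) \<circ> (m23_b \<circ> pl (AP ! k))"
    using S_facts(5)[OF k] e1 e2 by simp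
  then show ?thesis using AP_Gab[OF m] AP_Gab[OF k] b_Gab Gab_comp by metis
qed

lemma SL_C22: assumes k: "k < 23" shows "pl (SL ! k) \<in> C22"
  using SL_Gab[OF k] S_facts(2)[OF k] by (simp add: C22_def pl_def)

lemma WM_facts: "wev SL (WM ! 0) = PHI1" "wev SL (WM ! 1) = PHI2"
  "\<And>k. k < 14 \<Longrightarrow> wev SL (WM ! (k + 2)) = TTL ! k"
  "\<And>j i. j < 16 \<Longrightarrow> i \<in> set (WM ! j) \<Longrightarrow> i < 23"
  using chk_WM by (auto simp: list_all_iff)

lemma wev_C22: "j < 16 \<Longrightarrow> pl (wev SL (WM ! j)) \<in> C22"
  using wev_closed[of "WM ! j" SL C22] WM_facts(4) SL_C22 S_facts(2) C22_comp C22_id by auto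

lemma PHI1_C22: "pl PHI1 \<in> C22" using wev_C22[of 0] WM_facts by simp
lemma PHI2_C22: "pl PHI2 \<in> C22" using wev_C22[of 1] WM_facts by simp
lemma TTL_C22: "k < 14 \<Longrightarrow> pl (TTL ! k) \<in> C22" using wev_C22[of "k + 2"] WM_facts(3) by simp

definition g1 :: "nat \<Rightarrow> nat" where "g1 = lin 1 4 2"
definition g2 :: "nat \<Rightarrow> nat" where "g2 = lin 4 7 6"

lemma lin_out: "v \<notin> {1..7} \<Longrightarrow> lin a b c v = v"
  by (auto simp: lin_def)

lemma lin_carrierI:
  assumes r: "\<forall>x\<in>{1,2,3,4,5,6,7}. lin a b c x \<in> {1,2,3,4,5,6,7}"
    and i: "\<forall>x\<in>{1,2,3,4,5,6,7}. \<forall>y\<in>{1,2,3,4,5,6,7::nat}. lin a b c x = lin a b c y \<longrightarrow> x = y"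
    and l: "\<forall>x\<in>{0,1,2,3,4,5,6,7}. \<forall>y\<in>{0,1,2,3,4,5,6,7::nat}. lin a b c (xr x y) = xr (lin a b c x) (lin a b c y)"
  shows "lin a b c \<in> carrier L32"
proof -
  have inj: "inj_on (lin a b c) {1..7}" using i unfolding set17 inj_on_def by blast
  have "lin a b c ` {1..7} \<subseteq> {1..7}" using r unfolding set17 by blast
  then have "lin a b c ` {1..7} = {1..7}" using endo_inj_surj[OF _ _ inj] by simp
  then have "bij_betw (lin a b c) {1..7} {1..7}" using inj by (simp add: bij_betw_def)
  then have pe: "lin a b c permutes {1..7}" by (rule bij_imp_permutes) (rule lin_out)
  have r0: "lin a b c x \<in> {0..7}" if "x \<in> {0..7}" for x
  proof (cases "x = 0")
    case True then show ?thesis by (simp add: lin_def)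
  next
    case False then have "x \<in> {1,2,3,4,5,6,7}" using that by auto
    then have "lin a b c x \<in> {1,2,3,4,5,6,7}" using r by blast
    then show ?thesis by auto
  qed
  have "lin a b c (xor x y) = xor (lin a b c x) (lin a b c y)" if xy: "x \<in> {0..7}" "y \<in> {0..7}" for x y
  proof -
    have "x \<in> {0,1,2,3,4,5,6,7}" "y \<in> {0,1,2,3,4,5,6,7}" using xy unfolding set07 .
    then have "lin a b c (xr x y) = xr (lin a b c x) (lin a b c y)" using l by blast
    then show ?thesis by (simp only: xr_eq[OF xy] xr_eq[OF r0[OF xy(1)] r0[OF xy(2)]])
  qed
  then show ?thesis using pe unfolding L32_carrier by blast
qed

lemma g1_carr: "g1 \<in> carrier L32" unfolding g1_def by (rule lin_carrierI) (simp_all add: lin_def xr_def)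
lemma g2_carr: "g2 \<in> carrier L32" unfolding g2_def by (rule lin_carrierI) (simp_all add: lin_def xr_def)

lemma g1_img: "\<forall>i\<in>{0,1,2,3,4,5,6,7}. img g1 (PL ! i) = PL ! (SIG1 ! i)"
  by (simp add: g1_def img_def PL_def SIG1_def lin_def xr_def)
lemma g2_img: "\<forall>i\<in>{0,1,2,3,4,5,6,7}. img g2 (PL ! i) = PL ! (SIG2 ! i)"
  by (simp add: g2_def img_def PL_def SIG2_def lin_def xr_def)

lemma lt8: "(i::nat) < 8 \<longleftrightarrow> i \<in> {0,1,2,3,4,5,6,7}" by auto

lemma SIG_lt: "i < 8 \<Longrightarrow> SIG1 ! i < 8" "i < 8 \<Longrightarrow> SIG2 ! i < 8"
  unfolding lt8 by (auto simp: SIG1_def SIG2_def)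

lemma rho_g1: "i < 8 \<Longrightarrow> rho g1 i = SIG1 ! i"
  using rho_eq SIG_lt g1_img lt8 by metis
lemma rho_g2: "i < 8 \<Longrightarrow> rho g2 i = SIG2 ! i"
  using rho_eq SIG_lt g2_img lt8 by metis

lemma g1_app: "g1 v = lin 1 4 2 v" by (simp add: g1_def)
lemma g2_app: "g2 v = lin 4 7 6 v" by (simp add: g2_def)
lemma rho_g1': "i < 8 \<Longrightarrow> rho (lin 1 4 2) i = SIG1 ! i" using rho_g1 by (simp add: g1_def)
lemma rho_g2': "i < 8 \<Longrightarrow> rho (lin 4 7 6) i = SIG2 ! i" using rho_g2 by (simp add: g2_def)

lemma good_g1: "good g1" unfolding good_def using g1_carr g1_img SIG_lt lt8 by metis
lemma good_g2: "good g2" unfolding good_def using g2_carr g2_img SIG_lt lt8 by metis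

lemma phi_outside: "\<not>(1 \<le> x \<and> x \<le> 23) \<Longrightarrow> phi p x = x"
  by (rule phi_out) (auto simp: E1_def E2_def E3_def)

lemma phi_g1: "phi g1 = pl PHI1"
proof (rule map_eq_pl)
  show "map (phi g1) ID23 = PHI1"
    by (simp add: phi_def ID23_def PHI1_def E1_def E2_def E3_def g1_app lin_def xr_def rho_g1 SIG1_def)
qed (rule phi_outside)

lemma phi_g2: "phi g2 = pl PHI2"
proof (rule map_eq_pl)
  show "map (phi g2) ID23 = PHI2"
    by (simp add: phi_def ID23_def PHI2_def E1_def E2_def E3_def g2_app lin_def xr_def rho_g2 SIG2_def)
qed (rule phi_outside)

definition Pp :: "(nat \<Rightarrow> nat) \<Rightarrow> bool" where "Pp p \<longleftrightarrow> good p \<and> phi p \<in> C22"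

lemma Pp_comp: "Pp p \<Longrightarrow> Pp q \<Longrightarrow> Pp (p \<circ> q)"
  unfolding Pp_def using good_comp phi_comp C22_comp by metis

lemma Pp_g1: "Pp g1" unfolding Pp_def using good_g1 phi_g1 PHI1_C22 by simp
lemma Pp_g2: "Pp g2" unfolding Pp_def using good_g2 phi_g2 PHI2_C22 by simp

lemma Pp_tw: "set w \<subseteq> {0,1} \<Longrightarrow> Pp (linT (tw w))"
proof (induction w)
  case Nil
  have e: "linT (tw []) = id" unfolding tw_def linT_def using lin_124 by simp
  show ?case by (simp only: Pp_def e good_id phi_id C22_id simp_thms)
next
  case (Cons i w)
  then have IH: "Pp (linT (tw w))" by simp
  have g: "Pp (linT (gsel i))" "linT (gsel i) \<in> carrier L32"
    using Pp_g1 Pp_g2 g1_carr g2_carr by (auto simp: gsel_def linT_def g1_def g2_def)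
  have t: "linT (tw w) \<in> carrier L32" using IH by (simp add: Pp_def good_def)
  have "linT (tw (i # w)) = linT (gsel i) \<circ> linT (tw w)"
    using lin_tapp[OF g(2) t] by (simp add: tw_def)
  then show ?case using Pp_comp[OF g(1) IH] by metis
qed

lemma WF_ok: assumes "valid a b c" shows "tw (WF a b c) = (a,b,c) \<and> set (WF a b c) \<subseteq> {0,1}"
proof -
  have "a \<in> {1,2,3,4,5,6,7}" "b \<in> {1,2,3,4,5,6,7}" "c \<in> {1,2,3,4,5,6,7}"
    using assms unfolding valid_def set17 by auto
  then show ?thesis using assms unfolding insert_iff empty_iff
    apply (elim disjE)
    apply (simp_all add: valid_def xr_def)
    apply (simp_all add: WF_def tw_def tapp_def gsel_def lin_def xr_def)
    done
qed

lemma Pp_all: assumes p: "p \<in> carrier L32" shows "Pp p"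
proof -
  have v: "valid (p 1) (p 2) (p 4)" by (rule L32_valid[OF p])
  have "p = linT (tw (WF (p 1) (p 2) (p 4)))"
    using WF_ok[OF v] lin_repr[OF p] by (simp add: linT_def)
  then show ?thesis using Pp_tw WF_ok[OF v] by metis
qed

lemma phi_C22: "p \<in> carrier L32 \<Longrightarrow> phi p \<in> C22" using Pp_all by (simp add: Pp_def)
lemma L32_good: "p \<in> carrier L32 \<Longrightarrow> good p" using Pp_all by (simp add: Pp_def)
lemma phi_mult: "p \<in> carrier L32 \<Longrightarrow> q \<in> carrier L32 \<Longrightarrow> phi (p \<circ> q) = phi p \<circ> phi q"
  using phi_comp L32_good by blast

lemma phi_hom: "phi \<in> hom L32 M22"
  by (rule homI) (simp_all add: phi_C22 phi_mult)

lemma phi_group_hom: "group_hom L32 M22 phi"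
  unfolding group_hom_def group_hom_axioms_def using L32_group M22_group phi_hom by simp

definition NN :: "(nat \<Rightarrow> nat) set" where "NN = phi ` carrier L32"

lemma NN_sub: "subgroup NN M22"
  unfolding NN_def by (rule group_hom.img_is_subgroup[OF phi_group_hom])

lemma phi_iso: "phi \<in> iso L32 (M22\<lparr>carrier := NN\<rparr>)"
proof -
  have "phi \<in> hom L32 (M22\<lparr>carrier := NN\<rparr>)"
    by (rule homI) (auto simp: NN_def phi_mult)
  moreover have "bij_betw phi (carrier L32) NN"
    unfolding NN_def bij_betw_def inj_on_def using phi_inj by blast
  ultimately show ?thesis by (simp add: iso_def)
qed


definition pt :: "nat \<Rightarrow> nat \<Rightarrow> nat" where
 "pt a b = (if a = 1 then (if b = 2 then 0 else if b = 3 then 1 else if b = 4 then 2 else if b = 5 then 3 else if b = 6 then 4 else if b = 7 then 5 else 0) else if a = 2 then (if b = 1 then 1 else if b = 3 then 0 else if b = 4 then 6 else if b = 5 then 7 else if b = 6 then 8 else if b = 7 then 9 else 0) else if a = 3 then (if b = 1 then 0 else if b = 2 then 1 else if b = 4 then 10 else if b = 5 then 11 else if b = 6 then 12 else if b = 7 then 13 else 0) else if a = 4 then (if b = 1 then 3 else if b = 2 then 8 else if b = 3 then 13 else if b = 5 then 2 else if b = 6 then 6 else if b = 7 then 10 else 0) else if a = 5 then (if b = 1 then 2 else if b = 2 then 9 else if b = 3 then 12 else if b = 4 then 3 else if b = 6 then 11 else if b = 7 then 7 else 0) else if a = 6 then (if b = 1 then 5 else if b = 2 then 6 else if b = 3 then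 11 else if b = 4 then 8 else if b = 5 then 12 else if b = 7 then 4 else 0) else if a = 7 then (if b = 1 then 4 else if b = 2 then 7 else if b = 3 then 10 else if b = 4 then 13 else if b = 5 then 9 else if b = 6 then 5 else 0) else 0)"

definition PAIRS :: "(nat \<times> nat) list" where "PAIRS = [(1,2), (1,3), (1,4), (1,5), (1,6), (1,7), (2,1), (2,3), (2,4), (2,5), (2,6), (2,7), (3,1), (3,2), (3,4), (3,5), (3,6), (3,7), (4,1), (4,2), (4,3), (4,5), (4,6), (4,7), (5,1), (5,2), (5,3), (5,4), (5,6), (5,7), (6,1), (6,2), (6,3), (6,4), (6,5), (6,7), (7,1), (7,2), (7,3), (7,4), (7,5), (7,6)]"

definition REPT :: "(nat \<times> nat \<times> nat) list" where "REPT = [(1,2,4), (1,3,4), (1,4,2), (1,5,2), (1,6,2), (1,7,2), (2,4,1), (2,5,1), (2,6,1), (2,7,1), (3,4,1), (3,5,1), (3,6,1), (3,7,1)]"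

definition H12 :: "(nat \<times> nat \<times> nat) list" where "H12 = [(1,2,4), (1,2,5), (1,2,6), (1,2,7), (2,3,4), (2,3,5), (2,3,6), (2,3,7), (3,1,4), (3,1,5), (3,1,6), (3,1,7)]"

definition REPP :: "(nat \<times> nat) list" where "REPP = [(1,2), (1,3), (1,4), (1,5), (1,6), (1,7), (2,4), (2,5), (2,6), (2,7), (3,4), (3,5), (3,6), (3,7)]"

definition PERM1 :: "nat list" where "PERM1 = [2,3,0,1,4,5,8,13,6,10,9,12,11,7]"

definition PERM2 :: "nat list" where "PERM2 = [10,13,6,8,3,2,5,7,4,9,12,1,0,11]"


section \<open>The involutions and the coset action\<close>

definition tt :: "nat \<Rightarrow> nat \<Rightarrow> nat" where "tt i = pl (TTL ! i)"
definition ff :: "(nat \<Rightarrow> nat) \<Rightarrow> nat" where "ff x = pt (x 1) (x 2)"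

lemma L32_induct:
  assumes "R id" "R g1" "R g2" "\<And>p q. R p \<Longrightarrow> R q \<Longrightarrow> p \<in> carrier L32 \<Longrightarrow> q \<in> carrier L32 \<Longrightarrow> R (p \<circ> q)"
    and p: "p \<in> carrier L32"
  shows "R p"
proof -
  have gen: "set w \<subseteq> {0,1} \<Longrightarrow> R (linT (tw w)) \<and> linT (tw w) \<in> carrier L32" for w
  proof (induction w)
    case Nil
    have e: "linT (tw []) = id" unfolding tw_def linT_def using lin_124 by simp
    show ?case by (simp only: e assms(1) L32_id simp_thms)
  next
    case (Cons i w)
    then have IH: "R (linT (tw w))" "linT (tw w) \<in> carrier L32" by auto
    have g: "R (linT (gsel i))" "linT (gsel i) \<in> carrier L32"
      using assms(2,3) g1_carr g2_carr by (auto simp: gsel_def linT_def g1_def g2_def)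
    have e: "linT (tw (i # w)) = linT (gsel i) \<circ> linT (tw w)"
      using lin_tapp[OF g(2) IH(2)] by (simp add: tw_def)
    show ?case using assms(4)[OF g(1) IH(1) g(2) IH(2)] L32_comp[OF g(2) IH(2)] e by metis
  qed
  have v: "valid (p 1) (p 2) (p 4)" by (rule L32_valid[OF p])
  have "p = linT (tw (WF (p 1) (p 2) (p 4)))"
    using WF_ok[OF v] lin_repr[OF p] by (simp add: linT_def)
  then show ?thesis using gen WF_ok[OF v] by metis
qed

lemma valid_carr: assumes "valid a b c" shows "lin a b c \<in> carrier L32"
proof -
  have "lin a b c = linT (tw (WF a b c))" using WF_ok[OF assms] by (simp add: linT_def)
  then show ?thesis using Pp_tw[of "WF a b c"] WF_ok[OF assms] by (auto simp: Pp_def good_def)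
qed

lemma L32_x3: "x \<in> carrier L32 \<Longrightarrow> x 3 = xr (x 1) (x 2)"
  using lin_repr by (metis lin_def numeral_eq_iff semiring_norm(84,85,86,88,89) numeral_eq_one_iff)

lemma pair_facts: "\<forall>a\<in>{1,2,3,4,5,6,7}. \<forall>b\<in>{1,2,3,4,5,6,7}. a \<noteq> b \<longrightarrow>
    pt b (xr a b) = pt a b \<and> pt (xr a b) a = pt a b \<and> pt a b < 14 \<and> (a,b) \<in> set PAIRS"
  by (simp add: pt_def xr_def PAIRS_def)

definition inorb :: "nat \<times> nat \<Rightarrow> nat \<times> nat \<Rightarrow> bool" where
  "inorb u r \<longleftrightarrow> (case r of (x,y) \<Rightarrow> u = (x,y) \<or> u = (y, xr x y) \<or> u = (xr x y, x))"

lemma pt_orb: assumes "(a,b) \<in> set PAIRS" shows "inorb (a,b) (REPP ! pt a b) \<and>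
   fst (REPP ! pt a b) \<in> {0..7} \<and> snd (REPP ! pt a b) \<in> {0..7}"
  using assms unfolding PAIRS_def set_simps insert_iff empty_iff prod.inject
  apply (elim disjE conjE)
  apply (simp_all only:)
  apply (simp_all add: REPP_def pt_def xr_def inorb_def)
  done

lemma xr_id_all: "\<forall>x\<in>{0,1,2,3,4,5,6,7::nat}. \<forall>y\<in>{0,1,2,3,4,5,6,7::nat}.
   xr y (xr x y) = x \<and> xr (xr x y) x = y \<and> xr x (xr x y) = y \<and> xr (xr x y) y = x"
  by (simp add: xr_def)

lemma xr_id: "x \<in> {0..7} \<Longrightarrow> y \<in> {0..7} \<Longrightarrow>
   xr y (xr x y) = x \<and> xr (xr x y) x = y \<and> xr x (xr x y) = y \<and> xr (xr x y) y = x"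
  unfolding set07 by (rule xr_id_all[rule_format])

lemma pair_inv: assumes ab: "(a,b) \<in> set PAIRS" and cd: "(c,d) \<in> set PAIRS" and e: "pt c d = pt a b"
  shows "(c,d) = (a,b) \<or> (c,d) = (b, xr a b) \<or> (c,d) = (xr a b, a)"
proof -
  obtain x y where r: "REPP ! pt a b = (x,y)" by (cases "REPP ! pt a b") auto
  have o1: "inorb (a,b) (x,y)" and xy: "x \<in> {0..7}" "y \<in> {0..7}" using pt_orb[OF ab] r by auto
  have o2: "inorb (c,d) (x,y)" using pt_orb[OF cd] r e by auto
  show ?thesis using o1 o2 xr_id[OF xy] unfolding inorb_def by auto
qed

lemma x12: assumes x: "x \<in> carrier L32" shows "x 1 \<in> {1,2,3,4,5,6,7}" "x 2 \<in> {1,2,3,4,5,6,7}" "x 1 \<noteq> x 2"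
proof -
  show "x 1 \<in> {1,2,3,4,5,6,7}" "x 2 \<in> {1,2,3,4,5,6,7}" using L32_range[OF x] unfolding set17 by auto
  show "x 1 \<noteq> x 2" using L32_valid[OF x] by (simp add: valid_def)
qed

lemma ff_lt: "x \<in> carrier L32 \<Longrightarrow> ff x < 14"
  using pair_facts x12 unfolding ff_def by blast

lemma pair_mem: "x \<in> carrier L32 \<Longrightarrow> (x 1, x 2) \<in> set PAIRS"
  using pair_facts x12 by blast

lemma chk_conj: "list_all (\<lambda>i. cl (TTL ! (PERM1 ! i)) PHI1 = cl PHI1 (TTL ! i)) [0..<14]
  \<and> list_all (\<lambda>i. cl (TTL ! (PERM2 ! i)) PHI2 = cl PHI2 (TTL ! i)) [0..<14]"
  by code_simp

lemma perm_ok: assumes "(a,b) \<in> set PAIRS"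
  shows "pt (lin 1 4 2 a) (lin 1 4 2 b) = PERM1 ! pt a b \<and> pt (lin 4 7 6 a) (lin 4 7 6 b) = PERM2 ! pt a b"
  using assms unfolding PAIRS_def set_simps insert_iff empty_iff prod.inject
  apply (elim disjE conjE)
  apply (simp_all only:)
  apply (simp_all add: lin_def pt_def xr_def PERM1_def PERM2_def)
  done

lemma TT_facts: "\<And>i. i < 14 \<Longrightarrow> length (TTL ! i) = 23" "\<And>i. i < 14 \<Longrightarrow> cl (TTL ! i) (TTL ! i) = ID23"
  "\<And>i. i < 14 \<Longrightarrow> TTL ! i \<noteq> ID23" "distinct TTL" "length TTL = 14"
  using chk_TT by (auto simp: list_all_iff)

lemma PHI_len: "length PHI1 = 23" "length PHI2 = 23" by (simp_all add: PHI1_def PHI2_def)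

definition Eqp :: "(nat \<Rightarrow> nat) \<Rightarrow> bool" where
  "Eqp p \<longleftrightarrow> (\<forall>q\<in>carrier L32. tt (ff (p \<circ> q)) \<circ> phi p = phi p \<circ> tt (ff q))"

lemma Eqp_gen:
  assumes g: "g = lin a b c" and gc: "g \<in> carrier L32" and ph: "phi g = pl P" and lP: "length P = 23"
    and chk: "list_all (\<lambda>i. cl (TTL ! (PM ! i)) P = cl P (TTL ! i)) [0..<14]"
    and pm: "\<And>x y. (x,y) \<in> set PAIRS \<Longrightarrow> pt (lin a b c x) (lin a b c y) = PM ! pt x y"
  shows "Eqp g"
  unfolding Eqp_def
proof
  fix q assume q: "q \<in> carrier L32"
  have m: "(q 1, q 2) \<in> set PAIRS" by (rule pair_mem[OF q])
  have l: "pt (q 1) (q 2) < 14" using ff_lt[OF q] by (simp add: ff_def)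
  have "cl (TTL ! (PM ! pt (q 1) (q 2))) P = cl P (TTL ! pt (q 1) (q 2))"
    using chk l by (auto simp: list_all_iff)
  then have c: "cl (TTL ! pt (lin a b c (q 1)) (lin a b c (q 2))) P = cl P (TTL ! pt (q 1) (q 2))"
    using pm[OF m] by simp
  have "pt (lin a b c (q 1)) (lin a b c (q 2)) < 14"
    using ff_lt[OF L32_comp[OF gc q]] by (simp add: ff_def g)
  then have c2: "pl (TTL ! pt (lin a b c (q 1)) (lin a b c (q 2))) \<circ> pl P = pl P \<circ> pl (TTL ! pt (q 1) (q 2))"
    using pl_comp TT_facts(1) lP l c by metis
  have gq: "(g \<circ> q) 1 = lin a b c (q 1)" "(g \<circ> q) 2 = lin a b c (q 2)" by (simp_all add: g)
  show "tt (ff (g \<circ> q)) \<circ> phi g = phi g \<circ> tt (ff q)" by (simp only: tt_def ff_def ph gq c2)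
qed

lemma Eqp_g1: "Eqp g1"
  by (rule Eqp_gen[OF g1_def g1_carr phi_g1 PHI_len(1)]) (use chk_conj perm_ok in auto)
lemma Eqp_g2: "Eqp g2"
  by (rule Eqp_gen[OF g2_def g2_carr phi_g2 PHI_len(2)]) (use chk_conj perm_ok in auto)

lemma Eqp_id: "Eqp id"
  unfolding Eqp_def phi_id by simp

lemma Eqp_comp: assumes p: "Eqp p" and q: "Eqp q" and pc: "p \<in> carrier L32" and qc: "q \<in> carrier L32"
  shows "Eqp (p \<circ> q)"
  unfolding Eqp_def
proof
  fix r assume r: "r \<in> carrier L32"
  have qr: "q \<circ> r \<in> carrier L32" using L32_comp[OF qc r] .
  have e1: "tt (ff (p \<circ> (q \<circ> r))) \<circ> phi p = phi p \<circ> tt (ff (q \<circ> r))" using p qr by (simp add: Eqp_def)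
  have e2: "tt (ff (q \<circ> r)) \<circ> phi q = phi q \<circ> tt (ff r)" using q r by (simp add: Eqp_def)
  have "tt (ff (p \<circ> q \<circ> r)) \<circ> phi (p \<circ> q) = (tt (ff (p \<circ> (q \<circ> r))) \<circ> phi p) \<circ> phi q"
    by (simp add: phi_mult[OF pc qc] comp_assoc)
  also have "\<dots> = phi p \<circ> (tt (ff (q \<circ> r)) \<circ> phi q)" by (simp add: e1 comp_assoc)
  also have "\<dots> = phi (p \<circ> q) \<circ> tt (ff r)" by (simp add: e2 phi_mult[OF pc qc] comp_assoc)
  finally show "tt (ff (p \<circ> q \<circ> r)) \<circ> phi (p \<circ> q) = phi (p \<circ> q) \<circ> tt (ff r)" .
qed

lemma Eqp_all: "p \<in> carrier L32 \<Longrightarrow> Eqp p"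
  by (rule L32_induct[where R=Eqp]) (auto intro: Eqp_id Eqp_g1 Eqp_g2 Eqp_comp)

lemma tt_C22: "i < 14 \<Longrightarrow> tt i \<in> C22" using TTL_C22 by (simp add: tt_def)

lemma equivar: assumes g: "g \<in> carrier L32" and x: "x \<in> carrier L32"
  shows "phi g \<circ> tt (ff x) \<circ> inv\<^bsub>M22\<^esub> (phi g) = tt (ff (g \<circ> x))"
proof -
  interpret M: group M22 by (rule M22_group)
  have pg: "phi g \<in> carrier M22" using phi_C22[OF g] by simp
  have e: "tt (ff (g \<circ> x)) \<circ> phi g = phi g \<circ> tt (ff x)" using Eqp_all[OF g] x by (simp add: Eqp_def)
  have t: "tt (ff (g \<circ> x)) \<in> carrier M22" using tt_C22 ff_lt[OF L32_comp[OF g x]] by simp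
  have "tt (ff (g \<circ> x)) = tt (ff (g \<circ> x)) \<otimes>\<^bsub>M22\<^esub> (phi g \<otimes>\<^bsub>M22\<^esub> inv\<^bsub>M22\<^esub> (phi g))"
    using M.r_inv[OF pg] M.r_one[OF t] by simp
  also have "\<dots> = (tt (ff (g \<circ> x)) \<otimes>\<^bsub>M22\<^esub> phi g) \<otimes>\<^bsub>M22\<^esub> inv\<^bsub>M22\<^esub> (phi g)"
    using M.m_assoc[OF t pg M.inv_closed[OF pg]] by simp
  also have "\<dots> = phi g \<circ> tt (ff x) \<circ> inv\<^bsub>M22\<^esub> (phi g)" using e by simp
  finally show ?thesis by simp
qed



section \<open>The subgroup H and its cosets\<close>

definition HH :: "(nat \<Rightarrow> nat) set" where
  "HH = {p \<in> carrier L32. (p 1, p 2) \<in> {(1,2),(2,3),(3,1)}}"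

lemma xr_vals: "xr 1 2 = 3" "xr 2 3 = 1" "xr 3 1 = 2" by (simp_all add: xr_def)

lemma HH_cyc: assumes h: "h \<in> HH"
  shows "(h 1 = 1 \<and> h 2 = 2 \<and> h 3 = 3) \<or> (h 1 = 2 \<and> h 2 = 3 \<and> h 3 = 1) \<or> (h 1 = 3 \<and> h 2 = 1 \<and> h 3 = 2)"
proof -
  have hc: "h \<in> carrier L32" using h by (simp add: HH_def)
  show ?thesis using h L32_x3[OF hc] xr_vals unfolding HH_def by auto
qed

lemma HH_I: "h \<in> carrier L32 \<Longrightarrow> (h 1 = 1 \<and> h 2 = 2) \<or> (h 1 = 2 \<and> h 2 = 3) \<or> (h 1 = 3 \<and> h 2 = 1) \<Longrightarrow> h \<in> HH"
  by (auto simp: HH_def)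

lemma L32_inv: "p \<in> carrier L32 \<Longrightarrow> inv\<^bsub>L32\<^esub> p = inv' p"
proof -
  assume p: "p \<in> carrier L32"
  have "inv\<^bsub>L32\<^esub> p = inv\<^bsub>sym_group 7\<^esub> p"
    by (subst L32_eq, rule group.m_inv_consistent[OF sym_group_is_group L32_sub p])
  also have "\<dots> = inv' p" using L32_perm[OF p] by (simp add: sym_group_carrier)
  finally show ?thesis .
qed

lemma L32_invc: "p \<in> carrier L32 \<Longrightarrow> inv' p \<in> carrier L32"
  using group.inv_closed[OF L32_group] L32_inv by metis

lemma inv_val: "p \<in> carrier L32 \<Longrightarrow> p a = b \<Longrightarrow> inv' p b = a"
  using L32_perm permutes_inj inv_f_eq by metis

lemma HH_sub: "subgroup HH L32"
proof (rule group.subgroupI[OF L32_group])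
  show "HH \<subseteq> carrier L32" by (auto simp: HH_def)
  show "HH \<noteq> {}" using L32_id by (auto simp: HH_def)
next
  fix h assume h: "h \<in> HH"
  then have hc: "h \<in> carrier L32" by (simp add: HH_def)
  have "inv' h \<in> HH"
    using HH_cyc[OF h] inv_val[OF hc] by (intro HH_I[OF L32_invc[OF hc]]) metis
  then show "inv\<^bsub>L32\<^esub> h \<in> HH" using L32_inv[OF hc] by simp
next
  fix h k assume h: "h \<in> HH" and k: "k \<in> HH"
  have hc: "h \<in> carrier L32" and kc: "k \<in> carrier L32" using h k by (auto simp: HH_def)
  have "h \<circ> k \<in> HH"
    using HH_cyc[OF h] HH_cyc[OF k] by (intro HH_I[OF L32_comp[OF hc kc]]) auto
  then show "h \<otimes>\<^bsub>L32\<^esub> k \<in> HH" by simp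
qed

lemma coset_char: assumes x: "x \<in> carrier L32"
  shows "x <#\<^bsub>L32\<^esub> HH = {y \<in> carrier L32. ff y = ff x}"
proof
  show "x <#\<^bsub>L32\<^esub> HH \<subseteq> {y \<in> carrier L32. ff y = ff x}"
  proof
    fix y assume "y \<in> x <#\<^bsub>L32\<^esub> HH"
    then obtain h where h: "h \<in> HH" and y: "y = x \<circ> h" by (auto simp: l_coset_def)
    have hc: "h \<in> carrier L32" using h by (simp add: HH_def)
    have x3: "x 3 = xr (x 1) (x 2)" by (rule L32_x3[OF x])
    have pf: "pt (x 2) (xr (x 1) (x 2)) = pt (x 1) (x 2)" "pt (xr (x 1) (x 2)) (x 1) = pt (x 1) (x 2)"
      using pair_facts x12[OF x] by blast+
    have "ff y = ff x" using HH_cyc[OF h] x3 pf unfolding y ff_def by auto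
    then show "y \<in> {y \<in> carrier L32. ff y = ff x}" using L32_comp[OF x hc] y by simp
  qed
next
  show "{y \<in> carrier L32. ff y = ff x} \<subseteq> x <#\<^bsub>L32\<^esub> HH"
  proof
    fix y assume "y \<in> {y \<in> carrier L32. ff y = ff x}"
    then have y: "y \<in> carrier L32" and f: "pt (y 1) (y 2) = pt (x 1) (x 2)" by (auto simp: ff_def)
    have c: "(y 1, y 2) = (x 1, x 2) \<or> (y 1, y 2) = (x 2, xr (x 1) (x 2)) \<or> (y 1, y 2) = (xr (x 1) (x 2), x 1)"
      using pair_inv[OF pair_mem[OF x] pair_mem[OF y] f] .
    define h where "h = inv' x \<circ> y"
    have hc: "h \<in> carrier L32" unfolding h_def by (rule L32_comp[OF L32_invc[OF x] y])
    have x3: "x 3 = xr (x 1) (x 2)" by (rule L32_x3[OF x])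
    have "h \<in> HH"
    proof (rule HH_I[OF hc])
      have "inv' x (x 1) = 1" "inv' x (x 2) = 2" "inv' x (x 3) = 3" using inv_val[OF x] by auto
      then show "(h 1 = 1 \<and> h 2 = 2) \<or> (h 1 = 2 \<and> h 2 = 3) \<or> (h 1 = 3 \<and> h 2 = 1)"
        using c x3 unfolding h_def by auto
    qed
    moreover have "y = x \<circ> h"
      unfolding h_def using permutes_inverses(1)[OF L32_perm[OF x]] by (simp add: fun_eq_iff)
    ultimately show "y \<in> x <#\<^bsub>L32\<^esub> HH" by (auto simp: l_coset_def)
  qed
qed

definition COS :: "(nat \<Rightarrow> nat) set set" where
  "COS = {x <#\<^bsub>L32\<^esub> HH | x. x \<in> carrier L32}"

definition beta :: "(nat \<Rightarrow> nat) set \<Rightarrow> nat" where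
  "beta C = ff (SOME y. y \<in> C)"

lemma beta_eq: assumes x: "x \<in> carrier L32" shows "beta (x <#\<^bsub>L32\<^esub> HH) = ff x"
proof -
  have "x \<in> x <#\<^bsub>L32\<^esub> HH" using x coset_char by simp
  then have "(SOME y. y \<in> x <#\<^bsub>L32\<^esub> HH) \<in> x <#\<^bsub>L32\<^esub> HH" by (rule someI[of "\<lambda>y. y \<in> x <#\<^bsub>L32\<^esub> HH"])
  then show ?thesis unfolding beta_def using coset_char[OF x] by simp
qed

lemma upt14: "[0..<14] = [0,1,2,3,4,5,6,7,8,9,10,11,12,13::nat]" by code_simp

lemma REPT_ok: "list_all (\<lambda>(a,b,c). valid a b c) REPT \<and> map (\<lambda>(a,b,c). pt a b) REPT = [0..<14] \<and> length REPT = 14"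
  by (simp add: REPT_def valid_def pt_def xr_def upt14)

lemma ff_surj: assumes i: "i < 14" shows "\<exists>x\<in>carrier L32. ff x = i"
proof -
  obtain a b c where t: "REPT ! i = (a,b,c)" by (cases "REPT ! i") auto
  have "REPT ! i \<in> set REPT" using REPT_ok i by simp
  then have v: "valid a b c" using REPT_ok t by (auto simp: list_all_iff)
  have len: "length REPT = 14" using REPT_ok by simp
  have m1: "map (\<lambda>(a,b,c). pt a b) REPT ! i = i" using REPT_ok i by simp
  have m2: "map (\<lambda>(a,b,c). pt a b) REPT ! i = pt a b" using nth_map[of i REPT] len i t by simp
  have "pt a b = i" using m1 m2 by simp
  then show ?thesis using valid_carr[OF v] by (intro bexI[of _ "lin a b c"]) (auto simp: ff_def lin_def)
qed

lemma beta_bij: "bij_betw beta COS {..<14}"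
proof -
  have "inj_on beta COS"
  proof
    fix C D assume "C \<in> COS" "D \<in> COS" and e: "beta C = beta D"
    then obtain x y where x: "x \<in> carrier L32" "C = x <#\<^bsub>L32\<^esub> HH" and y: "y \<in> carrier L32" "D = y <#\<^bsub>L32\<^esub> HH"
      by (auto simp: COS_def)
    then show "C = D" using e beta_eq coset_char by simp
  qed
  moreover have "beta ` COS = {..<14}"
  proof
    show "beta ` COS \<subseteq> {..<14}" using beta_eq ff_lt by (auto simp: COS_def)
    show "{..<14} \<subseteq> beta ` COS"
    proof
      fix i assume "i \<in> {..<14::nat}"
      then obtain x where "x \<in> carrier L32" "ff x = i" using ff_surj by auto
      then show "i \<in> beta ` COS" using beta_eq by (auto simp: COS_def intro!: image_eqI[of _ _ "x <#\<^bsub>L32\<^esub> HH"])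
    qed
  qed
  ultimately show ?thesis by (simp add: bij_betw_def)
qed



section \<open>H is isomorphic to A4\<close>

definition psi :: "(nat \<Rightarrow> nat) \<Rightarrow> nat \<Rightarrow> nat" where
  "psi p i = (if i \<in> {1..4} then p (i + 3) - 3 else i)"

lemma psi_eqI: assumes "\<forall>i\<in>{1,2,3,4}. psi p i = f i" "\<And>i. i \<notin> {1..4} \<Longrightarrow> f i = i"
  shows "psi p = f"
proof
  fix i show "psi p i = f i"
  proof (cases "i \<in> {1..4}")
    case True then have "i \<in> {1,2,3,4}" by auto
    then show ?thesis using assms(1) by blast
  next
    case False
    then have "psi p i = i" unfolding psi_def by (rule if_not_P)
    then show ?thesis using assms(2)[OF False] by simp
  qed
qed

lemma cyc_out: "set cs \<subseteq> {1..4} \<Longrightarrow> i \<notin> {1..4} \<Longrightarrow> cycle_of_list cs i = (i::nat)"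
  by (rule id_outside_supp) auto

lemma cyc_alt: assumes "distinct [a,b,c]" "set [a,b,c] \<subseteq> {1..4}"
  shows "cycle_of_list [a,b,c] \<in> carrier (alt_group 4)"
proof -
  have "cycle_of_list [a,b,c] \<in> three_cycles 4"
    unfolding mem_Collect_eq using assms by (intro exI[of _ "[a,b,c]"]) auto
  then show ?thesis using three_cycles_incl by blast
qed

lemma alt_comp: "p \<in> carrier (alt_group 4) \<Longrightarrow> q \<in> carrier (alt_group 4) \<Longrightarrow> p \<circ> q \<in> carrier (alt_group 4)"
  using monoid.m_closed[OF group.is_monoid[OF alt_group_is_group]] alt_group_mult by metis

lemma alt1: "id \<in> carrier (alt_group 4)"
  using monoid.one_closed[OF group.is_monoid[OF alt_group_is_group]] alt_group_one by metis


lemma psi_H0: "psi (lin 1 2 4) \<in> carrier (alt_group 4)"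
proof -
  have e: "psi (lin 1 2 4) = id"
  proof (rule psi_eqI)
    show "\<forall>i\<in>{1,2,3,4}. psi (lin 1 2 4) i = (id) i" by (simp add: psi_def lin_def xr_def)
  next
    fix i :: nat assume "i \<notin> {1..4}"
    then show "(id) i = i" by simp
  qed
  show ?thesis unfolding e using alt1 by simp
qed

lemma psi_H1: "psi (lin 1 2 5) \<in> carrier (alt_group 4)"
proof -
  have e: "psi (lin 1 2 5) = cycle_of_list [1,2,3] \<circ> cycle_of_list [2,3,4]"
  proof (rule psi_eqI)
    show "\<forall>i\<in>{1,2,3,4}. psi (lin 1 2 5) i = (cycle_of_list [1,2,3] \<circ> cycle_of_list [2,3,4]) i" by (simp add: psi_def lin_def xr_def)
  next
    fix i :: nat assume "i \<notin> {1..4}"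
    then show "(cycle_of_list [1,2,3] \<circ> cycle_of_list [2,3,4]) i = i" using cyc_out[of "[1,2,3]"] cyc_out[of "[2,3,4]"] by simp
  qed
  show ?thesis unfolding e by (rule alt_comp; rule cyc_alt) auto
qed

lemma psi_H2: "psi (lin 1 2 6) \<in> carrier (alt_group 4)"
proof -
  have e: "psi (lin 1 2 6) = cycle_of_list [1,2,3] \<circ> cycle_of_list [1,2,4]"
  proof (rule psi_eqI)
    show "\<forall>i\<in>{1,2,3,4}. psi (lin 1 2 6) i = (cycle_of_list [1,2,3] \<circ> cycle_of_list [1,2,4]) i" by (simp add: psi_def lin_def xr_def)
  next
    fix i :: nat assume "i \<notin> {1..4}"
    then show "(cycle_of_list [1,2,3] \<circ> cycle_of_list [1,2,4]) i = i" using cyc_out[of "[1,2,3]"] cyc_out[of "[1,2,4]"] by simp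
  qed
  show ?thesis unfolding e by (rule alt_comp; rule cyc_alt) auto
qed

lemma psi_H3: "psi (lin 1 2 7) \<in> carrier (alt_group 4)"
proof -
  have e: "psi (lin 1 2 7) = cycle_of_list [1,2,3] \<circ> cycle_of_list [1,4,3]"
  proof (rule psi_eqI)
    show "\<forall>i\<in>{1,2,3,4}. psi (lin 1 2 7) i = (cycle_of_list [1,2,3] \<circ> cycle_of_list [1,4,3]) i" by (simp add: psi_def lin_def xr_def)
  next
    fix i :: nat assume "i \<notin> {1..4}"
    then show "(cycle_of_list [1,2,3] \<circ> cycle_of_list [1,4,3]) i = i" using cyc_out[of "[1,2,3]"] cyc_out[of "[1,4,3]"] by simp
  qed
  show ?thesis unfolding e by (rule alt_comp; rule cyc_alt) auto
qed

lemma psi_H4: "psi (lin 2 3 4) \<in> carrier (alt_group 4)"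
proof -
  have e: "psi (lin 2 3 4) = cycle_of_list [2,3,4]"
  proof (rule psi_eqI)
    show "\<forall>i\<in>{1,2,3,4}. psi (lin 2 3 4) i = (cycle_of_list [2,3,4]) i" by (simp add: psi_def lin_def xr_def)
  next
    fix i :: nat assume "i \<notin> {1..4}"
    then show "(cycle_of_list [2,3,4]) i = i" using cyc_out[of "[2,3,4]" i] by simp
  qed
  show ?thesis unfolding e by (rule cyc_alt) auto
qed

lemma psi_H5: "psi (lin 2 3 5) \<in> carrier (alt_group 4)"
proof -
  have e: "psi (lin 2 3 5) = cycle_of_list [1,2,4]"
  proof (rule psi_eqI)
    show "\<forall>i\<in>{1,2,3,4}. psi (lin 2 3 5) i = (cycle_of_list [1,2,4]) i" by (simp add: psi_def lin_def xr_def)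
  next
    fix i :: nat assume "i \<notin> {1..4}"
    then show "(cycle_of_list [1,2,4]) i = i" using cyc_out[of "[1,2,4]" i] by simp
  qed
  show ?thesis unfolding e by (rule cyc_alt) auto
qed

lemma psi_H6: "psi (lin 2 3 6) \<in> carrier (alt_group 4)"
proof -
  have e: "psi (lin 2 3 6) = cycle_of_list [1,3,2]"
  proof (rule psi_eqI)
    show "\<forall>i\<in>{1,2,3,4}. psi (lin 2 3 6) i = (cycle_of_list [1,3,2]) i" by (simp add: psi_def lin_def xr_def)
  next
    fix i :: nat assume "i \<notin> {1..4}"
    then show "(cycle_of_list [1,3,2]) i = i" using cyc_out[of "[1,3,2]" i] by simp
  qed
  show ?thesis unfolding e by (rule cyc_alt) auto
qed

lemma psi_H7: "psi (lin 2 3 7) \<in> carrier (alt_group 4)"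
proof -
  have e: "psi (lin 2 3 7) = cycle_of_list [1,4,3]"
  proof (rule psi_eqI)
    show "\<forall>i\<in>{1,2,3,4}. psi (lin 2 3 7) i = (cycle_of_list [1,4,3]) i" by (simp add: psi_def lin_def xr_def)
  next
    fix i :: nat assume "i \<notin> {1..4}"
    then show "(cycle_of_list [1,4,3]) i = i" using cyc_out[of "[1,4,3]" i] by simp
  qed
  show ?thesis unfolding e by (rule cyc_alt) auto
qed

lemma psi_H8: "psi (lin 3 1 4) \<in> carrier (alt_group 4)"
proof -
  have e: "psi (lin 3 1 4) = cycle_of_list [2,4,3]"
  proof (rule psi_eqI)
    show "\<forall>i\<in>{1,2,3,4}. psi (lin 3 1 4) i = (cycle_of_list [2,4,3]) i" by (simp add: psi_def lin_def xr_def)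
  next
    fix i :: nat assume "i \<notin> {1..4}"
    then show "(cycle_of_list [2,4,3]) i = i" using cyc_out[of "[2,4,3]" i] by simp
  qed
  show ?thesis unfolding e by (rule cyc_alt) auto
qed

lemma psi_H9: "psi (lin 3 1 5) \<in> carrier (alt_group 4)"
proof -
  have e: "psi (lin 3 1 5) = cycle_of_list [1,2,3]"
  proof (rule psi_eqI)
    show "\<forall>i\<in>{1,2,3,4}. psi (lin 3 1 5) i = (cycle_of_list [1,2,3]) i" by (simp add: psi_def lin_def xr_def)
  next
    fix i :: nat assume "i \<notin> {1..4}"
    then show "(cycle_of_list [1,2,3]) i = i" using cyc_out[of "[1,2,3]" i] by simp
  qed
  show ?thesis unfolding e by (rule cyc_alt) auto
qed

lemma psi_H10: "psi (lin 3 1 6) \<in> carrier (alt_group 4)"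
proof -
  have e: "psi (lin 3 1 6) = cycle_of_list [1,3,4]"
  proof (rule psi_eqI)
    show "\<forall>i\<in>{1,2,3,4}. psi (lin 3 1 6) i = (cycle_of_list [1,3,4]) i" by (simp add: psi_def lin_def xr_def)
  next
    fix i :: nat assume "i \<notin> {1..4}"
    then show "(cycle_of_list [1,3,4]) i = i" using cyc_out[of "[1,3,4]" i] by simp
  qed
  show ?thesis unfolding e by (rule cyc_alt) auto
qed

lemma psi_H11: "psi (lin 3 1 7) \<in> carrier (alt_group 4)"
proof -
  have e: "psi (lin 3 1 7) = cycle_of_list [1,4,2]"
  proof (rule psi_eqI)
    show "\<forall>i\<in>{1,2,3,4}. psi (lin 3 1 7) i = (cycle_of_list [1,4,2]) i" by (simp add: psi_def lin_def xr_def)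
  next
    fix i :: nat assume "i \<notin> {1..4}"
    then show "(cycle_of_list [1,4,2]) i = i" using cyc_out[of "[1,4,2]" i] by simp
  qed
  show ?thesis unfolding e by (rule cyc_alt) auto
qed


lemma H12_set: "set H12 = {(1,2,4),(1,2,5),(1,2,6),(1,2,7),(2,3,4),(2,3,5),(2,3,6),(2,3,7),(3,1,4),(3,1,5),(3,1,6),(3,1,7)}"
  by (simp add: H12_def)

lemma HH_enum: assumes h: "h \<in> HH" shows "(h 1, h 2, h 4) \<in> set H12 \<and> h = lin (h 1) (h 2) (h 4)"
proof -
  have hc: "h \<in> carrier L32" using h by (simp add: HH_def)
  have v: "valid (h 1) (h 2) (h 4)" by (rule L32_valid[OF hc])
  have h4: "h 4 \<in> {4,5,6,7}"
  proof -
    have a: "h 4 \<in> {1,2,3,4,5,6,7}" using v unfolding valid_def set17 by blast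
    have b: "h 4 \<noteq> h 1" "h 4 \<noteq> h 2" "h 4 \<noteq> h 3" using v L32_x3[OF hc] by (auto simp: valid_def)
    have c: "{h 1, h 2, h 3} = {1,2,3}" using HH_cyc[OF h] by auto
    have "h 4 \<notin> {1,2,3}" using b c by blast
    then show ?thesis using a by blast
  qed
  have "(h 1, h 2) \<in> {(1,2),(2,3),(3,1)}" using h by (simp add: HH_def)
  then have "(h 1, h 2, h 4) \<in> set H12" using h4 unfolding H12_set by auto
  then show ?thesis using lin_repr[OF hc] by simp
qed

lemma H12_HH: assumes t: "(a,b,c) \<in> set H12" shows "lin a b c \<in> HH"
proof -
  have v: "valid a b c" and ab: "(a = 1 \<and> b = 2) \<or> (a = 2 \<and> b = 3) \<or> (a = 3 \<and> b = 1)"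
    using t unfolding H12_set insert_iff empty_iff prod.inject
    by (elim disjE conjE; simp only:; simp add: valid_def xr_def)+
  have "lin a b c 1 = a" "lin a b c 2 = b" by (simp_all add: lin_def)
  then show ?thesis using valid_carr[OF v] ab by (intro HH_I) auto
qed

lemma HH_eq: "HH = (\<lambda>(a,b,c). lin a b c) ` set H12"
proof
  show "HH \<subseteq> (\<lambda>(a,b,c). lin a b c) ` set H12"
  proof
    fix h assume h: "h \<in> HH"
    show "h \<in> (\<lambda>(a,b,c). lin a b c) ` set H12" using HH_enum[OF h] by force
  qed
  show "(\<lambda>(a,b,c). lin a b c) ` set H12 \<subseteq> HH" using H12_HH by auto
qed

lemma HH_card: "card HH = 12"
proof -
  have "inj_on (\<lambda>(a,b,c). lin a b c) (set H12)"
  proof (rule inj_onI)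
    fix s t assume "s \<in> set H12" "t \<in> set H12" and e: "(\<lambda>(a,b,c). lin a b c) s = (\<lambda>(a,b,c). lin a b c) t"
    obtain a b c where s: "s = (a,b,c)" by (cases s) auto
    obtain a' b' c' where t: "t = (a',b',c')" by (cases t) auto
    have "lin a b c 1 = lin a' b' c' 1" "lin a b c 2 = lin a' b' c' 2" "lin a b c 4 = lin a' b' c' 4"
      using e s t by simp_all
    then show "s = t" using s t by (simp add: lin_def)
  qed
  then have "card HH = card (set H12)" unfolding HH_eq by (rule card_image)
  also have "\<dots> = 12" by (simp add: H12_set)
  finally show ?thesis .
qed

lemma HH_47: assumes h: "h \<in> HH" and v: "v \<in> {4..7}" shows "h v \<in> {4..7}"
proof -
  have all: "\<forall>t\<in>set H12. \<forall>v\<in>{4,5,6,7}. (case t of (a,b,c) \<Rightarrow> lin a b c v) \<in> {4,5,6,7}"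
    unfolding H12_set by (simp add: lin_def xr_def)
  have "v \<in> {4,5,6,7}" using v by auto
  then have "h v \<in> {4,5,6,7}" using all HH_enum[OF h] by fastforce
  then show ?thesis by auto
qed

lemma psi_alt: assumes h: "h \<in> HH" shows "psi h \<in> carrier (alt_group 4)"
proof -
  have m: "(h 1, h 2, h 4) \<in> set H12" and e: "h = lin (h 1) (h 2) (h 4)" using HH_enum[OF h] by auto
  have "(h 1, h 2, h 4) \<in> {(1,2,4),(1,2,5),(1,2,6),(1,2,7),(2,3,4),(2,3,5),(2,3,6),(2,3,7),(3,1,4),(3,1,5),(3,1,6),(3,1,7)}"
    using m unfolding H12_set .
  then show ?thesis
    apply (subst e)
    using psi_H0 psi_H1 psi_H2 psi_H3 psi_H4 psi_H5 psi_H6 psi_H7 psi_H8 psi_H9 psi_H10 psi_H11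
    by auto
qed

lemma psi_comp: assumes h: "h \<in> HH" and k: "k \<in> HH" shows "psi (h \<circ> k) = psi h \<circ> psi k"
proof
  fix i show "psi (h \<circ> k) i = (psi h \<circ> psi k) i"
  proof (cases "i \<in> {1..4}")
    case True
    then have "i + 3 \<in> {4..7}" by auto
    then have r: "k (i + 3) \<in> {4..7}" using HH_47[OF k] by blast
    then have m: "k (i + 3) - 3 \<in> {1..4}" and e: "k (i + 3) - 3 + 3 = k (i + 3)" by auto
    have "psi (h \<circ> k) i = h (k (i + 3)) - 3" unfolding psi_def using True by simp
    moreover have "psi k i = k (i + 3) - 3" unfolding psi_def using True by simp
    moreover have "psi h (k (i + 3) - 3) = h (k (i + 3)) - 3" unfolding psi_def using m e by simp
    ultimately show ?thesis by simp
  next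
    case False
    have "psi (h \<circ> k) i = i" "psi k i = i" "psi h i = i" unfolding psi_def using False by (rule if_not_P)+
    then show ?thesis by simp
  qed
qed

lemma psi_inj: "inj_on psi HH"
proof (rule inj_onI)
  fix h k assume h: "h \<in> HH" and k: "k \<in> HH" and e: "psi h = psi k"
  have hc: "h \<in> carrier L32" and kc: "k \<in> carrier L32" using h k by (auto simp: HH_def)
  have v: "h v = k v" if v: "v \<in> {4..7}" for v
  proof -
    have i: "v - 3 \<in> {1..4}" "v - 3 + 3 = v" using v by auto
    have "h v - 3 = k v - 3" using fun_cong[OF e, of "v - 3"] i by (simp add: psi_def)
    then show ?thesis using HH_47[OF h v] HH_47[OF k v] by auto
  qed
  have x: "xor 4 5 = (1::nat)" "xor 4 6 = (2::nat)" by simp_all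
  have "h 1 = xor (h 4) (h 5)" using L32_lin[OF hc, of 4 5] x by simp
  moreover have "k 1 = xor (k 4) (k 5)" using L32_lin[OF kc, of 4 5] x by simp
  moreover have "h 2 = xor (h 4) (h 6)" using L32_lin[OF hc, of 4 6] x by simp
  moreover have "k 2 = xor (k 4) (k 6)" using L32_lin[OF kc, of 4 6] x by simp
  ultimately have "h 1 = k 1" "h 2 = k 2" "h 4 = k 4" using v by auto
  then show "h = k" using lin_repr[OF hc] lin_repr[OF kc] by metis
qed

lemma HH_iso: "L32\<lparr>carrier := HH\<rparr> \<cong> alt_group 4"
proof -
  have hom: "psi \<in> hom (L32\<lparr>carrier := HH\<rparr>) (alt_group 4)"
    by (rule homI) (auto simp: psi_alt psi_comp alt_group_mult)
  have c: "card (carrier (alt_group 4)) = 12"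
    using alt_group_card_carrier[of 4] by (simp add: fact_numeral)
  then have fin: "finite (carrier (alt_group 4))" by (metis card.infinite zero_neq_numeral)
  have sub: "psi ` HH \<subseteq> carrier (alt_group 4)" using psi_alt by auto
  have "card (psi ` HH) = 12" using card_image[OF psi_inj] HH_card by simp
  then have "psi ` HH = carrier (alt_group 4)" using card_subset_eq[OF fin sub] c by simp
  then have "bij_betw psi HH (carrier (alt_group 4))" using psi_inj by (simp add: bij_betw_def)
  then have "psi \<in> iso (L32\<lparr>carrier := HH\<rparr>) (alt_group 4)" using hom by (simp add: iso_def)
  then show ?thesis unfolding is_iso_def by blast
qed



section \<open>Generation of M22 by the involutions\<close>

definition TG :: "(nat \<Rightarrow> nat) set" where "TG = generate M22 (tt ` {..<14})"

lemma TG_sub: "subgroup TG M22"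
  unfolding TG_def using tt_C22 by (intro group.generate_is_subgroup[OF M22_group]) auto

lemma TG_C22: "TG \<subseteq> C22" using subgroup.subset[OF TG_sub] by simp

lemma TG_comp: "x \<in> TG \<Longrightarrow> y \<in> TG \<Longrightarrow> x \<circ> y \<in> TG"
  using subgroup.m_closed[OF TG_sub] by fastforce

lemma TG_id: "id \<in> TG" using subgroup.one_closed[OF TG_sub] by simp

lemma TG_inv: "x \<in> TG \<Longrightarrow> inv\<^bsub>sym_group 23\<^esub> x \<in> TG"
  using subgroup.m_inv_closed[OF TG_sub] M22_inv TG_C22 by fastforce

lemma tt_TG: "i < 14 \<Longrightarrow> tt i \<in> TG" unfolding TG_def by (auto intro: generate.incl)

lemma WS_facts: "\<And>k. k < 23 \<Longrightarrow> wev TTL (WS ! k) = SL ! k" "\<And>k i. k < 23 \<Longrightarrow> i \<in> set (WS ! k) \<Longrightarrow> i < 14"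
  using chk_WS by (auto simp: list_all_iff)

lemma SL_TG: assumes k: "k < 23" shows "pl (SL ! k) \<in> TG"
proof -
  have "pl (wev TTL (WS ! k)) \<in> TG \<and> length (wev TTL (WS ! k)) = 23"
    using WS_facts(2)[OF k] tt_TG TT_facts(1) TG_comp TG_id
    by (intro wev_closed) (auto simp: tt_def)
  then show ?thesis using WS_facts(1)[OF k] by simp
qed

definition ck :: "nat \<Rightarrow> nat \<Rightarrow> nat" where "ck k = pl (AP ! k)"

lemma ck_a: "k < 22 \<Longrightarrow> m23_a \<circ> ck k = ck (Suc k)"
  unfolding ck_def LA_eq using AP_facts(3,6) pl_comp LA_len by simp

lemma ck_a22: "m23_a \<circ> ck 22 = ck 0"
  unfolding ck_def LA_eq using AP_facts(2,4,6) pl_comp[of LA "AP ! 22"] LA_len by simp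

lemma ck_b: assumes k: "k < 23" shows "m23_b \<circ> ck k = ck (JL ! k) \<circ> pl (SL ! k)"
proof -
  have "pl LB \<circ> pl (AP ! k) = pl (cl LB (AP ! k))" using pl_comp AP_facts(6)[OF k] LB_len by simp
  also have "\<dots> = pl (cl (AP ! (JL ! k)) (SL ! k))" using S_facts(4)[OF k] by simp
  also have "\<dots> = pl (AP ! (JL ! k)) \<circ> pl (SL ! k)"
    using pl_comp AP_facts(6) S_facts(2,3)[OF k] by simp
  finally show ?thesis unfolding ck_def LB_eq .
qed

lemma ck_0: "ck 0 = id" unfolding ck_def using AP_facts(2) pl_ID23 by simp

lemma ck_23: "k < 23 \<Longrightarrow> 1 \<le> k \<Longrightarrow> ck k 23 = k"
  unfolding ck_def using AP_facts(5,6) by (simp add: pl_def)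

definition SS :: "(nat \<Rightarrow> nat) set" where "SS = {ck k \<circ> g | k g. k < 23 \<and> g \<in> TG}"

lemma SS_I: "k < 23 \<Longrightarrow> g \<in> TG \<Longrightarrow> ck k \<circ> g \<in> SS" by (auto simp: SS_def)

lemma sym_inv_l: "x \<in> carrier (sym_group 23) \<Longrightarrow> inv\<^bsub>sym_group 23\<^esub> x \<circ> x = id"
  using group.l_inv[OF SG] by (fastforce simp: sym_group_def)

lemma sym_inv_r: "x \<in> carrier (sym_group 23) \<Longrightarrow> x \<circ> inv\<^bsub>sym_group 23\<^esub> x = id"
  using group.r_inv[OF SG] by (fastforce simp: sym_group_def)

lemma SS_a: assumes s: "s \<in> SS" shows "m23_a \<circ> s \<in> SS" "inv\<^bsub>sym_group 23\<^esub> m23_a \<circ> s \<in> SS"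
proof -
  obtain k g where s: "s = ck k \<circ> g" and k: "k < 23" and g: "g \<in> TG" using s by (auto simp: SS_def)
  show "m23_a \<circ> s \<in> SS"
  proof (cases "k < 22")
    case True
    then have "m23_a \<circ> s = ck (Suc k) \<circ> g" using ck_a s by (metis comp_assoc)
    then show ?thesis using SS_I[OF _ g] True by simp
  next
    case False
    then have "k = 22" using k by simp
    then have "m23_a \<circ> s = ck 0 \<circ> g" using ck_a22 s by (metis comp_assoc)
    then show ?thesis using SS_I[OF _ g] by simp
  qed
  define k' where "k' = (if k = 0 then 22 else k - 1)"
  have k': "k' < 23" "m23_a \<circ> ck k' = ck k"
    using k ck_a ck_a22 unfolding k'_def by auto
  have "inv\<^bsub>sym_group 23\<^esub> m23_a \<circ> s = (inv\<^bsub>sym_group 23\<^esub> m23_a \<circ> m23_a) \<circ> ck k' \<circ> g"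
    using s k'(2) by (simp add: comp_assoc)
  also have "\<dots> = ck k' \<circ> g" using sym_inv_l[OF a_perm] by simp
  finally show "inv\<^bsub>sym_group 23\<^esub> m23_a \<circ> s \<in> SS" using SS_I[OF k'(1) g] by simp
qed

lemma SS_b: assumes s: "s \<in> SS" shows "m23_b \<circ> s \<in> SS" "inv\<^bsub>sym_group 23\<^esub> m23_b \<circ> s \<in> SS"
proof -
  obtain k g where s: "s = ck k \<circ> g" and k: "k < 23" and g: "g \<in> TG" using s by (auto simp: SS_def)
  have "m23_b \<circ> s = ck (JL ! k) \<circ> (pl (SL ! k) \<circ> g)" using ck_b[OF k] s by (metis comp_assoc)
  then show "m23_b \<circ> s \<in> SS" using SS_I S_facts(3)[OF k] TG_comp[OF SL_TG[OF k] g] by simp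
  define j where "j = KL ! k"
  have j: "j < 23" "JL ! j = k" using S_facts(3)[OF k] unfolding j_def by auto
  have Sc: "pl (SL ! j) \<in> carrier (sym_group 23)" using C22_carr SL_C22[OF j(1)] by simp
  have e: "m23_b \<circ> ck j = ck k \<circ> pl (SL ! j)" using ck_b[OF j(1)] j(2) by simp
  have "ck k = ck k \<circ> (pl (SL ! j) \<circ> inv\<^bsub>sym_group 23\<^esub> (pl (SL ! j)))" using sym_inv_r[OF Sc] by simp
  also have "\<dots> = m23_b \<circ> ck j \<circ> inv\<^bsub>sym_group 23\<^esub> (pl (SL ! j))" using e by (simp add: comp_assoc)
  finally have ck: "ck k = m23_b \<circ> ck j \<circ> inv\<^bsub>sym_group 23\<^esub> (pl (SL ! j))" .
  have "inv\<^bsub>sym_group 23\<^esub> m23_b \<circ> s = (inv\<^bsub>sym_group 23\<^esub> m23_b \<circ> m23_b) \<circ> ck j \<circ> (inv\<^bsub>sym_group 23\<^esub> (pl (SL ! j)) \<circ> g)"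
    using s ck by (simp add: comp_assoc)
  also have "\<dots> = ck j \<circ> (inv\<^bsub>sym_group 23\<^esub> (pl (SL ! j)) \<circ> g)" using sym_inv_l[OF b_perm] by simp
  finally show "inv\<^bsub>sym_group 23\<^esub> m23_b \<circ> s \<in> SS"
    using SS_I[OF j(1)] TG_comp[OF TG_inv[OF SL_TG[OF j(1)]] g] by simp
qed

lemma Gab_SS: assumes x: "x \<in> Gab" shows "\<forall>s\<in>SS. x \<circ> s \<in> SS"
  using x unfolding Gab_def
proof (induction x rule: generate.induct)
  case one
  have "\<one>\<^bsub>sym_group 23\<^esub> = id" by (simp add: sym_group_def)
  then show ?case by (metis id_comp)
next
  case (incl h) then have "h = m23_a \<or> h = m23_b" by simp
  then show ?case using SS_a(1) SS_b(1) by blast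
next
  case (inv h) then have "h = m23_a \<or> h = m23_b" by simp
  then show ?case using SS_a(2) SS_b(2) by blast
next
  case (eng h1 h2)
  have e: "h1 \<otimes>\<^bsub>sym_group 23\<^esub> h2 = h1 \<circ> h2" by (simp add: sym_group_def)
  show ?case
  proof
    fix s assume "s \<in> SS"
    then have "h1 \<circ> (h2 \<circ> s) \<in> SS" using eng.IH by blast
    then show "h1 \<otimes>\<^bsub>sym_group 23\<^esub> h2 \<circ> s \<in> SS" unfolding e by (metis comp_assoc)
  qed
qed

lemma C22_TG: "C22 \<subseteq> TG"
proof
  fix p assume p: "p \<in> C22"
  have "ck 0 \<circ> id \<in> SS" using SS_I[OF _ TG_id] by simp
  then have "p \<circ> (ck 0 \<circ> id) \<in> SS" using Gab_SS p by (auto simp: C22_def)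
  then have "p \<in> SS" using ck_0 by simp
  then obtain k g where pk: "p = ck k \<circ> g" and k: "k < 23" and g: "g \<in> TG" by (auto simp: SS_def)
  have "g 23 = 23" using TG_C22 g by (auto simp: C22_def)
  then have "ck k 23 = 23" using p pk by (auto simp: C22_def)
  then have "k = 0" using ck_23[OF k] k by (cases "k = 0") auto
  then show "p \<in> TG" using pk g ck_0 by simp
qed

lemma TG_eq: "generate M22 (tt ` {..<14}) = carrier M22"
  using C22_TG TG_C22 unfolding TG_def by auto



lemma tt_inj: "inj_on tt {..<14}"
proof (rule inj_onI)
  fix i j assume i: "i \<in> {..<14::nat}" and j: "j \<in> {..<14::nat}" and e: "tt i = tt j"
  have e2: "TTL ! i = TTL ! j" using pl_inj[of "TTL ! i" "TTL ! j"] e TT_facts(1) i j by (simp add: tt_def)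
  have l: "i < length TTL" "j < length TTL" using i j TT_facts(5) by auto
  show "i = j" using nth_eq_iff_index_eq[OF TT_facts(4) l] e2 by simp
qed

lemma tt_props: "i < 14 \<Longrightarrow> tt i \<in> carrier M22 \<and> tt i \<noteq> \<one>\<^bsub>M22\<^esub> \<and> tt i \<otimes>\<^bsub>M22\<^esub> tt i = \<one>\<^bsub>M22\<^esub>"
proof -
  assume i: "i < 14"
  have "tt i \<noteq> id"
  proof
    assume "tt i = id"
    then have "pl (TTL ! i) = pl ID23" using pl_ID23 by (simp add: tt_def)
    then have "TTL ! i = ID23" using pl_inj TT_facts(1)[OF i] by simp
    then show False using TT_facts(3)[OF i] by simp
  qed
  moreover have "tt i \<circ> tt i = id"
    using pl_comp[of "TTL ! i" "TTL ! i"] TT_facts(1,2)[OF i] pl_ID23 by (simp add: tt_def)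
  ultimately show ?thesis using tt_C22[OF i] by simp
qed

lemma conj_perm: "\<forall>n\<in>NN. \<forall>i<14. \<exists>j<14. n \<otimes>\<^bsub>M22\<^esub> tt i \<otimes>\<^bsub>M22\<^esub> inv\<^bsub>M22\<^esub> n = tt j"
proof (intro ballI allI impI)
  fix n i assume n: "n \<in> NN" and i: "i < (14::nat)"
  obtain g where g: "g \<in> carrier L32" "n = phi g" using n by (auto simp: NN_def)
  obtain x where x: "x \<in> carrier L32" "ff x = i" using ff_surj[OF i] by auto
  have "n \<otimes>\<^bsub>M22\<^esub> tt i \<otimes>\<^bsub>M22\<^esub> inv\<^bsub>M22\<^esub> n = tt (ff (g \<circ> x))"
    using equivar[OF g(1) x(1)] g(2) x(2) by simp
  then show "\<exists>j<14. n \<otimes>\<^bsub>M22\<^esub> tt i \<otimes>\<^bsub>M22\<^esub> inv\<^bsub>M22\<^esub> n = tt j"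
    using ff_lt[OF L32_comp[OF g(1) x(1)]] by blast
qed

lemma conj_trans: "\<forall>i<14. \<forall>j<14. \<exists>n\<in>NN. n \<otimes>\<^bsub>M22\<^esub> tt i \<otimes>\<^bsub>M22\<^esub> inv\<^bsub>M22\<^esub> n = tt j"
proof (intro allI impI)
  fix i j assume i: "i < (14::nat)" and j: "j < (14::nat)"
  obtain x where x: "x \<in> carrier L32" "ff x = i" using ff_surj[OF i] by auto
  obtain y where y: "y \<in> carrier L32" "ff y = j" using ff_surj[OF j] by auto
  define g where "g = y \<circ> inv' x"
  have gc: "g \<in> carrier L32" unfolding g_def by (rule L32_comp[OF y(1) L32_invc[OF x(1)]])
  have "g \<circ> x = y" unfolding g_def using permutes_inverses(2)[OF L32_perm[OF x(1)]] by (simp add: fun_eq_iff)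
  then have "phi g \<otimes>\<^bsub>M22\<^esub> tt i \<otimes>\<^bsub>M22\<^esub> inv\<^bsub>M22\<^esub> (phi g) = tt j"
    using equivar[OF gc x(1)] x(2) y(2) by simp
  moreover have "phi g \<in> NN" using gc by (simp add: NN_def)
  ultimately show "\<exists>n\<in>NN. n \<otimes>\<^bsub>M22\<^esub> tt i \<otimes>\<^bsub>M22\<^esub> inv\<^bsub>M22\<^esub> n = tt j" by blast
qed

lemma beta_part: "\<exists>\<beta>. bij_betw \<beta> {x <#\<^bsub>L32\<^esub> HH | x. x \<in> carrier L32} {..<14} \<and>
        (\<forall>g\<in>carrier L32. \<forall>x\<in>carrier L32.
           phi g \<otimes>\<^bsub>M22\<^esub> tt (\<beta> (x <#\<^bsub>L32\<^esub> HH)) \<otimes>\<^bsub>M22\<^esub> inv\<^bsub>M22\<^esub> (phi g)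
             = tt (\<beta> ((g \<otimes>\<^bsub>L32\<^esub> x) <#\<^bsub>L32\<^esub> HH)))"
proof (intro exI[of _ beta] conjI ballI)
  show "bij_betw beta {x <#\<^bsub>L32\<^esub> HH | x. x \<in> carrier L32} {..<14}"
    using beta_bij by (simp add: COS_def)
next
  fix g x assume g: "g \<in> carrier L32" and x: "x \<in> carrier L32"
  show "phi g \<otimes>\<^bsub>M22\<^esub> tt (beta (x <#\<^bsub>L32\<^esub> HH)) \<otimes>\<^bsub>M22\<^esub> inv\<^bsub>M22\<^esub> (phi g)
             = tt (beta ((g \<otimes>\<^bsub>L32\<^esub> x) <#\<^bsub>L32\<^esub> HH))"
    using equivar[OF g x] beta_eq[OF x] beta_eq[OF L32_comp[OF g x]] by simp
qed

theorem proposition2p1: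
  shows "\<exists>(N :: (nat \<Rightarrow> nat) set) (t :: nat \<Rightarrow> (nat \<Rightarrow> nat)) (\<phi> :: (nat \<Rightarrow> nat) \<Rightarrow> (nat \<Rightarrow> nat)) H.
     subgroup N M22 \<and> \<phi> \<in> iso L32 (M22 \<lparr> carrier := N \<rparr>) \<and>
     subgroup H L32 \<and> L32 \<lparr> carrier := H \<rparr> \<cong> alt_group 4 \<and>
     inj_on t {..<14} \<and>
     (\<forall>i<14. t i \<in> carrier M22 \<and> t i \<noteq> \<one>\<^bsub>M22\<^esub> \<and> t i \<otimes>\<^bsub>M22\<^esub> t i = \<one>\<^bsub>M22\<^esub>) \<and>
     generate M22 (t ` {..<14}) = carrier M22 \<and>
     (\<forall>n\<in>N. \<forall>i<14. \<exists>j<14. n \<otimes>\<^bsub>M22\<^esub> t i \<otimes>\<^bsub>M22\<^esub> inv\<^bsub>M22\<^esub> n = t j) \<and>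
     (\<forall>i<14. \<forall>j<14. \<exists>n\<in>N. n \<otimes>\<^bsub>M22\<^esub> t i \<otimes>\<^bsub>M22\<^esub> inv\<^bsub>M22\<^esub> n = t j) \<and>
     (\<exists>\<beta>. bij_betw \<beta> {x <#\<^bsub>L32\<^esub> H | x. x \<in> carrier L32} {..<14} \<and>
        (\<forall>g\<in>carrier L32. \<forall>x\<in>carrier L32.
           \<phi> g \<otimes>\<^bsub>M22\<^esub> t (\<beta> (x <#\<^bsub>L32\<^esub> H)) \<otimes>\<^bsub>M22\<^esub> inv\<^bsub>M22\<^esub> (\<phi> g)
             = t (\<beta> ((g \<otimes>\<^bsub>L32\<^esub> x) <#\<^bsub>L32\<^esub> H))))"
  apply (rule exI[of _ NN], rule exI[of _ tt], rule exI[of _ phi], rule exI[of _ HH])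
  using NN_sub phi_iso HH_sub HH_iso tt_inj tt_props TG_eq conj_perm conj_trans beta_part
  by blast

end
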